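(* Let $\mathcal{A}$ be a pOC with state set $Q$ and let $p,q\in Q$ be such that $[p{\downarrow}q]>0$ and $q$ lies in a bottom strongly connected component $B$ of $\mathcal{X}$ whose trend $t$ satisfies $t\neq0$. Then $$E(p{\downarrow}q)\le 85000\cdot\frac{|Q|^6}{x_{\min}^{5|Q|+|Q|^3}\cdot t^4}.$$
   Context: A pOC is $\mathcal{A}=(Q,\delta^{=0},\delta^{>0},P^{=0},P^{>0})$ with the following components. - $\delta^{>0}\subseteq Q\times\{-1,0,1\}\times Q$ are the positive rules and $\delta^{=0}\subseteq Q\times\{0,1\}\times Q$ are the zero rules. Every state has both kinds of outgoing rule. - $P^{>0}$ and $P^{=0}$ are positive rational probability distributions over the outgoing rules of each state. $\mathcal{M}_\mathcal{A}$ is the Markov chain on configurations $p(i)$ with the following transitions: - $p(0)\to q(c)$ with probability $P^{=0}(p,c,q)$; - for $i\ge1$, $p(i)\to q(i+c)$ with probability $P^{>0}(p,c,q)$. $\mathrm{Run}(p{\downarrow}q)$ is the set of runs from $p(1)$ that visit $q(0)$ with the counter positive before that visit. $[p{\downarrow}q]$ is its probability, and $E(p{\downarrow}q)$ is the conditional expected number of transitions until the first visit of $q(0)$ given $\mathrm{Run}(p{\downarrow}q)$. $\mathcal{X}$ is the finite Markov chain on $Q$ with transition matrix $A_{pq}=\sum_c P^{>0}(p,c,q)$. For a bottom strongly connected component $B$ of $\mathcal{X}$, let $\alpha$ be the (unique) invariant distribution of $\mathcal{X}$ restricted to $B$. For $r\in B$ let $s_r=\sum_{(r,c,r')\in\delta^{>0}}P^{>0}(r,c,r')\cdot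 c$. The trend of $B$ is $t=\sum_{r\in B}\alpha_r s_r$. $x_{\min}$ is the least positive probability used in the rules of $\mathcal{A}$. *)

theory Defs
  imports "HOL-Analysis.Analysis"
begin

text \<open>Rules are triples (p, c, q); the probability assignments are given as functions
  that are positive exactly on the rules and vanish elsewhere.\<close>

definition pOC ::
  "('q::finite \<times> int \<times> 'q) set \<Rightarrow> ('q \<times> int \<times> 'q) set \<Rightarrow>
   ('q \<Rightarrow> int \<Rightarrow> 'q \<Rightarrow> real) \<Rightarrow> ('q \<Rightarrow> int \<Rightarrow> 'q \<Rightarrow> real) \<Rightarrow> bool" where
  "pOC dz dp Pz Pp \<longleftrightarrow>
     dp \<subseteq> {(p, c, q). c \<in> {-1, 0, 1}} \<and>
     dz \<subseteq> {(p, c, q). c \<in> {0, 1}} \<and>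
     (\<forall>p. \<exists>c q. (p, c, q) \<in> dp) \<and>
     (\<forall>p. \<exists>c q. (p, c, q) \<in> dz) \<and>
     (\<forall>p c q. (p, c, q) \<in> dp \<longrightarrow> Pp p c q > 0 \<and> Pp p c q \<in> \<rat>) \<and>
     (\<forall>p c q. (p, c, q) \<in> dz \<longrightarrow> Pz p c q > 0 \<and> Pz p c q \<in> \<rat>) \<and>
     (\<forall>p c q. (p, c, q) \<notin> dp \<longrightarrow> Pp p c q = 0) \<and>
     (\<forall>p c q. (p, c, q) \<notin> dz \<longrightarrow> Pz p c q = 0) \<and>
     (\<forall>p. (\<Sum>(c, q) \<in> {-1, 0, 1} \<times> UNIV. Pp p c q) = 1) \<and>
     (\<forall>p. (\<Sum>(c, q) \<in> {0, 1} \<times> UNIV. Pz p c q) = 1)"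

definition trans_prob ::
  "('q \<Rightarrow> int \<Rightarrow> 'q \<Rightarrow> real) \<Rightarrow> ('q \<Rightarrow> int \<Rightarrow> 'q \<Rightarrow> real) \<Rightarrow>
   ('q \<times> nat) \<Rightarrow> ('q \<times> nat) \<Rightarrow> real" where
  "trans_prob Pz Pp x y =
     (if snd x = 0 then Pz (fst x) (int (snd y) - int (snd x)) (fst y)
      else Pp (fst x) (int (snd y) - int (snd x)) (fst y))"

text \<open>first_hit Pz Pp q n x: probability that the run from configuration x
  reaches q(0) after exactly n transitions, with the counter positive at all
  configurations before (i.e. q(0) is the first configuration with counter zero).
  Only configurations with counter at most i+1 are reachable in one step from i.\<close>

fun first_hit ::
  "('q::finite \<Rightarrow> int \<Rightarrow> 'q \<Rightarrow> real) \<Rightarrow> ('q \<Rightarrow> int \<Rightarrow> 'q \<Rightarrow> real) \<Rightarrow>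
   'q \<Rightarrow> nat \<Rightarrow> ('q \<times> nat) \<Rightarrow> real" where
  "first_hit Pz Pp q 0 x = (if x = (q, 0) then 1 else 0)"
| "first_hit Pz Pp q (Suc n) x =
     (if snd x = 0 then 0
      else (\<Sum>y \<in> UNIV \<times> {..snd x + 1}. trans_prob Pz Pp x y * first_hit Pz Pp q n y))"

definition term_prob where
  "term_prob Pz Pp p q = (\<Sum>n. first_hit Pz Pp q n (p, 1))"

text \<open>Conditional expected termination time E(p\<down>q); finiteness is stated separately
  (summability of the series below).\<close>
definition exp_time where
  "exp_time Pz Pp p q = (\<Sum>n. real n * first_hit Pz Pp q n (p, 1)) / term_prob Pz Pp p q"

definition X_mat :: "('q \<Rightarrow> int \<Rightarrow> 'q \<Rightarrow> real) \<Rightarrow> 'q \<Rightarrow> 'q \<Rightarrow> real" where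
  "X_mat Pp p q = (\<Sum>c \<in> {-1, 0, 1}. Pp p c q)"

definition X_edges where
  "X_edges Pp = {(p, q). X_mat Pp p q > 0}"

definition is_bscc :: "('q \<Rightarrow> int \<Rightarrow> 'q \<Rightarrow> real) \<Rightarrow> 'q set \<Rightarrow> bool" where
  "is_bscc Pp B \<longleftrightarrow> B \<noteq> {} \<and>
     (\<forall>r \<in> B. \<forall>r'. (r, r') \<in> X_edges Pp \<longrightarrow> r' \<in> B) \<and>
     (\<forall>r \<in> B. \<forall>r' \<in> B. (r, r') \<in> (X_edges Pp)\<^sup>*)"

definition is_inv_dist :: "('q::finite \<Rightarrow> int \<Rightarrow> 'q \<Rightarrow> real) \<Rightarrow> 'q set \<Rightarrow> ('q \<Rightarrow> real) \<Rightarrow> bool" where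
  "is_inv_dist Pp B \<alpha> \<longleftrightarrow>
     (\<forall>r \<in> B. \<alpha> r \<ge> 0) \<and> (\<Sum>r \<in> B. \<alpha> r) = 1 \<and>
     (\<forall>r' \<in> B. (\<Sum>r \<in> B. \<alpha> r * X_mat Pp r r') = \<alpha> r')"

definition drift :: "('q \<Rightarrow> int \<Rightarrow> 'q \<Rightarrow> real) \<Rightarrow> 'q \<Rightarrow> real" where
  "drift Pp r = (\<Sum>(c, r') \<in> {-1, 0, 1} \<times> UNIV. Pp r c r' * of_int c)"

definition trend :: "('q::finite \<Rightarrow> int \<Rightarrow> 'q \<Rightarrow> real) \<Rightarrow> 'q set \<Rightarrow> ('q \<Rightarrow> real) \<Rightarrow> real" where
  "trend Pp B \<alpha> = (\<Sum>r \<in> B. \<alpha> r * drift Pp r)"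

definition x_min where
  "x_min dz dp Pz Pp =
     Min ({Pp p c q | p c q. (p, c, q) \<in> dp} \<union> {Pz p c q | p c q. (p, c, q) \<in> dz})"

end

theory Submission
  imports Defs
begin

locale pctx =
  fixes dz dp :: "('q::finite \<times> int \<times> 'q) set"
    and Pz Pp :: "'q \<Rightarrow> int \<Rightarrow> 'q \<Rightarrow> real"
  assumes P: "pOC dz dp Pz Pp"
begin

lemma Pp_zero: "(r, c, r') \<notin> dp \<Longrightarrow> Pp r c r' = 0"
  using P unfolding pOC_def by blast

lemma Pp_pos: "(r, c, r') \<in> dp \<Longrightarrow> Pp r c r' > 0"
  using P unfolding pOC_def by blast

lemma Pp_nonneg: "Pp r c r' \<ge> 0"
  by (cases "(r, c, r') \<in> dp") (auto simp: Pp_zero dest: Pp_pos)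

lemma Pp_pos_dp: "Pp r c r' > 0 \<Longrightarrow> (r, c, r') \<in> dp"
  using Pp_zero by force

lemma Pp_pos_c: "Pp r c r' > 0 \<Longrightarrow> c \<in> {-1, 0, 1}"
proof -
  assume "Pp r c r' > 0"
  then have "(r, c, r') \<in> dp" by (rule Pp_pos_dp)
  moreover have "dp \<subseteq> {(p, c, q). c \<in> {-1, 0, 1}}" using P unfolding pOC_def by blast
  ultimately show ?thesis by blast
qed

lemma Pp_out: "c \<notin> {-1, 0, 1} \<Longrightarrow> Pp r c r' = 0"
  using Pp_pos_c[of r c r'] Pp_nonneg[of r c r'] by force

lemma Pp_sum: "(\<Sum>r'\<in>UNIV. \<Sum>c\<in>{-1,0,1}. Pp r c r') = 1"
proof -
  have "(\<Sum>(c, q) \<in> {-1, 0, 1} \<times> (UNIV::'q set). Pp r c q) = 1"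
    using P unfolding pOC_def by blast
  then have "(\<Sum>c\<in>{-1,0,1}. \<Sum>r'\<in>UNIV. Pp r c r') = 1"
    by (simp add: sum.cartesian_product)
  then show ?thesis by (subst sum.swap) simp
qed

lemma Pp_le1: "Pp r c r' \<le> 1"
proof (cases "c \<in> {-1,0,1}")
  case True
  have "Pp r c r' \<le> (\<Sum>c\<in>{-1,0,1}. Pp r c r')"
    by (rule member_le_sum) (use True Pp_nonneg in auto)
  also have "\<dots> \<le> (\<Sum>r''\<in>UNIV. \<Sum>c\<in>{-1,0,1}. Pp r c r'')"
    by (rule member_le_sum) (auto simp: Pp_nonneg add_nonneg_nonneg)
  finally show ?thesis using Pp_sum by simp
qed (simp add: Pp_out)

lemma X_nonneg: "X_mat Pp r r' \<ge> 0"
  unfolding X_mat_def by (intro sum_nonneg Pp_nonneg)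

lemma X_sum: "(\<Sum>r'\<in>UNIV. X_mat Pp r r') = 1"
  unfolding X_mat_def using Pp_sum by simp

lemma X_le1: "X_mat Pp r r' \<le> 1"
proof -
  have "X_mat Pp r r' \<le> (\<Sum>r'\<in>UNIV. X_mat Pp r r')"
    by (rule member_le_sum) (auto simp: X_nonneg)
  then show ?thesis using X_sum by simp
qed

lemma drift_alt: "drift Pp r = (\<Sum>r'\<in>UNIV. \<Sum>c\<in>{-1,0,1}. Pp r c r' * of_int c)"
proof -
  have "drift Pp r = (\<Sum>c\<in>{-1,0,1}. \<Sum>r'\<in>UNIV. Pp r c r' * of_int c)"
    unfolding drift_def by (simp add: sum.cartesian_product)
  then show ?thesis by (subst sum.swap) simp
qed

lemma drift_alt2: "drift Pp r = (\<Sum>r'\<in>UNIV. Pp r 1 r' - Pp r (-1) r')"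
  unfolding drift_alt by (simp add: sum_subtractf)

lemma drift_abs: "\<bar>drift Pp r\<bar> \<le> 1"
proof -
  have "\<bar>drift Pp r\<bar> \<le> (\<Sum>r'\<in>UNIV. \<bar>\<Sum>c\<in>{-1,0,1}. Pp r c r' * of_int c\<bar>)"
    unfolding drift_alt by (rule sum_abs)
  also have "\<dots> \<le> (\<Sum>r'\<in>UNIV. \<Sum>c\<in>{-1,0,1}. Pp r c r')"
  proof (rule sum_mono)
    fix r'
    show "\<bar>\<Sum>c\<in>{-1,0,1}. Pp r c r' * of_int c\<bar> \<le> (\<Sum>c\<in>{-1,0,1}. Pp r c r')"
      using Pp_nonneg[of r "-1" r'] Pp_nonneg[of r 0 r'] Pp_nonneg[of r 1 r'] by simp
  qed
  finally show ?thesis using Pp_sum by simp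
qed

definition xm where "xm = x_min dz dp Pz Pp"

lemma xm_set_finite:
  "finite ({Pp p c q | p c q. (p, c, q) \<in> dp} \<union> {Pz p c q | p c q. (p, c, q) \<in> dz})"
proof -
  have f1: "finite dp"
  proof (rule finite_subset)
    show "dp \<subseteq> UNIV \<times> {-1,0,1} \<times> UNIV" using P unfolding pOC_def by auto
  qed auto
  have f2: "finite dz"
  proof (rule finite_subset)
    show "dz \<subseteq> UNIV \<times> {0,1} \<times> UNIV" using P unfolding pOC_def by auto
  qed auto
  have "{Pp p c q | p c q. (p, c, q) \<in> dp} = (\<lambda>(p,c,q). Pp p c q) ` dp" by force
  moreover have "{Pz p c q | p c q. (p, c, q) \<in> dz} = (\<lambda>(p,c,q). Pz p c q) ` dz" by force
  ultimately show ?thesis using f1 f2 by simp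
qed

lemma xm_le: "(r, c, r') \<in> dp \<Longrightarrow> xm \<le> Pp r c r'"
  unfolding xm_def x_min_def by (rule Min_le[OF xm_set_finite]) blast

lemma xm_le': "Pp r c r' > 0 \<Longrightarrow> xm \<le> Pp r c r'"
  using xm_le Pp_pos_dp by blast

lemma xm_pos: "xm > 0"
proof -
  have "\<exists>c r'. (undefined, c, r') \<in> dp" using P unfolding pOC_def by blast
  then obtain r c r' where "(r, c, r') \<in> dp" by blast
  then have ne: "{Pp p c q | p c q. (p, c, q) \<in> dp} \<union> {Pz p c q | p c q. (p, c, q) \<in> dz} \<noteq> {}"
    by blast
  have "\<forall>a \<in> {Pp p c q | p c q. (p, c, q) \<in> dp} \<union> {Pz p c q | p c q. (p, c, q) \<in> dz}. a > 0"
    using P unfolding pOC_def by auto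
  then show ?thesis unfolding xm_def x_min_def
    using Min_in[OF xm_set_finite ne] by blast
qed

lemma xm_le1: "xm \<le> 1"
proof -
  have "\<exists>c r'. (undefined, c, r') \<in> dp" using P unfolding pOC_def by blast
  then obtain r c r' where "(r, c, r') \<in> dp" by blast
  then show ?thesis using xm_le Pp_le1 by (meson order_trans)
qed

lemma X_ge_xm: "X_mat Pp r r' > 0 \<Longrightarrow> xm \<le> X_mat Pp r r'"
proof -
  assume "X_mat Pp r r' > 0"
  have "\<exists>c\<in>{-1,0,1}. Pp r c r' > 0"
  proof (rule ccontr)
    assume "\<not> ?thesis"
    then have "\<forall>c\<in>{-1,0,1}. Pp r c r' = 0" using Pp_nonneg by (meson linorder_not_le order_antisym)
    then have "X_mat Pp r r' = 0" unfolding X_mat_def by simp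
    with \<open>X_mat Pp r r' > 0\<close> show False by simp
  qed
  then obtain c where c: "c \<in> {-1,0,1}" "Pp r c r' > 0" by blast
  have "Pp r c r' \<le> X_mat Pp r r'"
    unfolding X_mat_def by (rule member_le_sum) (use c Pp_nonneg in auto)
  then show ?thesis using xm_le' c by (meson order_trans)
qed

end

context pctx
begin

lemma sum_prod_split: "(\<Sum>y\<in>A \<times> B. f y) = (\<Sum>a\<in>A. \<Sum>b\<in>B. f (a, b))"
  by (simp add: sum.cartesian_product split_def)

lemma inner_reindex:
  fixes F :: "nat \<Rightarrow> real"
  assumes i: "i > 0"
  shows "(\<Sum>j\<in>{..i+1}. Pp r (int j - int i) r' * F j) = (\<Sum>c\<in>{-1,0,1}. Pp r c r' * F (nat (int i + c)))"
proof -
  have split: "{..i+1} = {i-1, i, i+1} \<union> {..<i-1}" using i by auto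
  have z: "(\<Sum>j\<in>{..<i-1}. Pp r (int j - int i) r' * F j) = 0"
  proof (rule sum.neutral, rule ballI)
    fix j assume "j \<in> {..<i-1}"
    then have "int j - int i \<notin> {-1,0,1}" by auto
    then show "Pp r (int j - int i) r' * F j = 0" by (simp add: Pp_out)
  qed
  have "(\<Sum>j\<in>{..i+1}. Pp r (int j - int i) r' * F j) =
        (\<Sum>j\<in>{i-1, i, i+1}. Pp r (int j - int i) r' * F j)"
    unfolding split using z by (subst sum.union_disjoint) auto
  also have "\<dots> = Pp r (-1) r' * F (i-1) + Pp r 0 r' * F i + Pp r 1 r' * F (i+1)"
    using i by (cases i) (simp_all add: algebra_simps)
  also have "\<dots> = (\<Sum>c\<in>{-1,0,1}. Pp r c r' * F (nat (int i + c)))"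
    using i by (simp add: nat_diff_distrib' nat_add_distrib)
  finally show ?thesis .
qed

lemma H_Suc:
  assumes i: "i > 0"
  shows "first_hit Pz Pp q (Suc m) (r, i) =
    (\<Sum>r'\<in>UNIV. \<Sum>c\<in>{-1,0,1}. Pp r c r' * first_hit Pz Pp q m (r', nat (int i + c)))"
proof -
  have "first_hit Pz Pp q (Suc m) (r, i) =
     (\<Sum>y \<in> UNIV \<times> {..i + 1}. trans_prob Pz Pp (r, i) y * first_hit Pz Pp q m y)"
    using i by simp
  also have "\<dots> = (\<Sum>r'\<in>UNIV. \<Sum>j\<in>{..i+1}. Pp r (int j - int i) r' * first_hit Pz Pp q m (r', j))"
    using i by (simp only: sum_prod_split trans_prob_def fst_conv snd_conv) simp
  also have "\<dots> = (\<Sum>r'\<in>UNIV. \<Sum>c\<in>{-1,0,1}. Pp r c r' * first_hit Pz Pp q m (r', nat (int i + c)))"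
    by (rule sum.cong[OF refl], rule inner_reindex[OF i])
  finally show ?thesis .
qed

lemma H_zero_Suc: "first_hit Pz Pp q (Suc m) (r, 0) = 0"
  by simp

lemma H_0: "first_hit Pz Pp q 0 y = (if y = (q, 0) then 1 else 0)"
  by simp

lemma H_nonneg: "first_hit Pz Pp q m y \<ge> 0"
proof (induction m arbitrary: y)
  case 0 then show ?case by simp
next
  case (Suc m)
  obtain r i where y: "y = (r, i)" by fastforce
  show ?case
  proof (cases "i = 0")
    case True then show ?thesis using y by simp
  next
    case False
    then show ?thesis unfolding y using Suc
      by (subst H_Suc) (auto intro!: sum_nonneg mult_nonneg_nonneg simp: Pp_nonneg)
  qed
qed

lemma H_psum_le1: "(\<Sum>m\<le>M. first_hit Pz Pp q m y) \<le> 1"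
proof (induction M arbitrary: y)
  case 0 then show ?case by simp
next
  case (Suc M)
  obtain r i where y: "y = (r, i)" by fastforce
  show ?case
  proof (cases "i = 0")
    case True
    have "(\<Sum>m\<le>Suc M. first_hit Pz Pp q m y) = first_hit Pz Pp q 0 y + (\<Sum>m\<le>M. first_hit Pz Pp q (Suc m) y)"
      by (subst sum.atMost_Suc_shift) simp
    also have "\<dots> = first_hit Pz Pp q 0 y" using True y by simp
    finally show ?thesis by simp
  next
    case False
    have "(\<Sum>m\<le>Suc M. first_hit Pz Pp q m y) = first_hit Pz Pp q 0 y + (\<Sum>m\<le>M. first_hit Pz Pp q (Suc m) y)"
      by (subst sum.atMost_Suc_shift) simp
    also have "\<dots> = (\<Sum>m\<le>M. \<Sum>r'\<in>UNIV. \<Sum>c\<in>{-1,0,1}. Pp r c r' * first_hit Pz Pp q m (r', nat (int i + c)))"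
    proof -
      have "first_hit Pz Pp q 0 y = 0" using False y by simp
      moreover have "\<And>m. first_hit Pz Pp q (Suc m) y = (\<Sum>r'\<in>UNIV. \<Sum>c\<in>{-1,0,1}. Pp r c r' * first_hit Pz Pp q m (r', nat (int i + c)))"
        using False y H_Suc by simp
      ultimately show ?thesis by simp
    qed
    also have "\<dots> = (\<Sum>r'\<in>UNIV. \<Sum>c\<in>{-1,0,1}. Pp r c r' * (\<Sum>m\<le>M. first_hit Pz Pp q m (r', nat (int i + c))))"
      by (simp add: sum_distrib_left sum.swap[of _ "{..M}"])
    also have "\<dots> \<le> (\<Sum>r'\<in>UNIV. \<Sum>c\<in>{-1,0,1}. Pp r c r' * 1)"
      by (intro sum_mono mult_left_mono Suc.IH Pp_nonneg)
    also have "\<dots> = 1" using Pp_sum by simp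
    finally show ?thesis .
  qed
qed

lemma H_le1: "first_hit Pz Pp q m y \<le> 1"
proof -
  have "first_hit Pz Pp q m y \<le> (\<Sum>m'\<le>m. first_hit Pz Pp q m' y)"
    by (rule member_le_sum) (auto simp: H_nonneg)
  then show ?thesis using H_psum_le1[where M=m and q=q and y=y] by linarith
qed

lemma H_summable: "summable (\<lambda>m. first_hit Pz Pp q m y)"
proof (rule summableI_nonneg_bounded[where x=1])
  fix n
  show "(\<Sum>i<n. first_hit Pz Pp q i y) \<le> 1"
  proof (cases n)
    case 0 then show ?thesis by simp
  next
    case (Suc k)
    then have "{..<n} = {..k}" by auto
    then show ?thesis using H_psum_le1[where M=k] by simp
  qed
qed (simp add: H_nonneg)

end

lemma ivt_up:
  fixes h :: "nat \<Rightarrow> nat"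
  assumes "a \<le> b" "h a \<le> v" "v \<le> h b" "\<forall>k. a \<le> k \<longrightarrow> k < b \<longrightarrow> h (Suc k) \<le> h k + 1"
  shows "\<exists>k. a \<le> k \<and> k \<le> b \<and> h k = v"
  using assms
proof (induction b)
  case 0 then show ?case by auto
next
  case (Suc b)
  show ?case
  proof (cases "a = Suc b")
    case True then show ?thesis using Suc.prems by auto
  next
    case False
    then have ab: "a \<le> b" using Suc.prems by simp
    show ?thesis
    proof (cases "v \<le> h b")
      case True
      then obtain k where "a \<le> k \<and> k \<le> b \<and> h k = v" using Suc.IH[OF ab] Suc.prems by auto
      then show ?thesis by auto
    next
      case False
      then have "h (Suc b) \<le> h b + 1" using Suc.prems ab by auto
      then have "h (Suc b) = v" using False Suc.prems by simp
      then show ?thesis using Suc.prems by auto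
    qed
  qed
qed

lemma ivt_down:
  fixes h :: "nat \<Rightarrow> nat"
  assumes "a \<le> b" "h b \<le> v" "v \<le> h a" "\<forall>k. a \<le> k \<longrightarrow> k < b \<longrightarrow> h k \<le> h (Suc k) + 1"
  shows "\<exists>k. a \<le> k \<and> k \<le> b \<and> h k = v"
  using assms
proof (induction b)
  case 0 then show ?case by auto
next
  case (Suc b)
  show ?case
  proof (cases "a = Suc b")
    case True then show ?thesis using Suc.prems by auto
  next
    case False
    then have ab: "a \<le> b" using Suc.prems by simp
    show ?thesis
    proof (cases "h b \<le> v")
      case True
      then obtain k where "a \<le> k \<and> k \<le> b \<and> h k = v" using Suc.IH[OF ab] Suc.prems by auto
      then show ?thesis by auto
    next
      case False
      then have "h b \<le> h (Suc b) + 1" using Suc.prems ab by auto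
      then have "h (Suc b) = v" using False Suc.prems by simp
      then show ?thesis using Suc.prems by auto
    qed
  qed
qed

context pctx
begin

definition stp :: "'q \<times> nat \<Rightarrow> 'q \<times> nat \<Rightarrow> bool" where
  "stp y y' \<longleftrightarrow> snd y > 0 \<and> Pp (fst y) (int (snd y') - int (snd y)) (fst y') > 0"

definition pth :: "'q \<Rightarrow> nat \<Rightarrow> (nat \<Rightarrow> 'q \<times> nat) \<Rightarrow> bool" where
  "pth q m c \<longleftrightarrow> c m = (q, 0) \<and> (\<forall>k<m. stp (c k) (c (Suc k)))"

lemma stp_step: "stp y y' \<Longrightarrow> snd y' \<le> snd y + 1 \<and> snd y \<le> snd y' + 1"
  unfolding stp_def using Pp_pos_c by fastforce

lemma stp_shift:
  assumes "stp (r, i) (r', j)" "D \<le> i" "D \<le> j" "i - D > 0"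
  shows "stp (r, i - D) (r', j - D)"
proof -
  have "int (j - D) - int (i - D) = int j - int i" using assms(2,3) by simp
  then show ?thesis using assms unfolding stp_def by simp
qed

lemma path_of_H:
  "first_hit Pz Pp q m y > 0 \<Longrightarrow> \<exists>c. c 0 = y \<and> pth q m c"
proof (induction m arbitrary: y)
  case 0
  then have "y = (q, 0)" by (simp split: if_splits)
  then show ?case by (intro exI[of _ "\<lambda>_. y"]) (simp add: pth_def)
next
  case (Suc m)
  obtain r i where y: "y = (r, i)" by fastforce
  have i: "i > 0" using Suc.prems y by (cases i) auto
  have pos: "(\<Sum>r'\<in>UNIV. \<Sum>c\<in>{-1,0,1}. Pp r c r' * first_hit Pz Pp q m (r', nat (int i + c))) > 0"
    using Suc.prems y H_Suc[OF i] by simp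
  have "\<exists>r'. (\<Sum>c\<in>{-1,0,1}. Pp r c r' * first_hit Pz Pp q m (r', nat (int i + c))) > 0"
  proof (rule ccontr)
    assume "\<not> ?thesis"
    then have "\<forall>r'. (\<Sum>c\<in>{-1,0,1}. Pp r c r' * first_hit Pz Pp q m (r', nat (int i + c))) \<le> 0"
      using not_less by blast
    then have "(\<Sum>r'\<in>UNIV. \<Sum>c\<in>{-1,0,1}. Pp r c r' * first_hit Pz Pp q m (r', nat (int i + c))) \<le> 0"
      by (meson sum_nonpos)
    then show False using pos by simp
  qed
  then obtain r' where r': "(\<Sum>c\<in>{-1,0,1}. Pp r c r' * first_hit Pz Pp q m (r', nat (int i + c))) > 0" by blast
  have "\<exists>c\<in>{-1,0,1}. Pp r c r' * first_hit Pz Pp q m (r', nat (int i + c)) > 0"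
  proof (rule ccontr)
    assume "\<not> ?thesis"
    then have "\<forall>c\<in>{-1,0,1}. Pp r c r' * first_hit Pz Pp q m (r', nat (int i + c)) \<le> 0" by auto
    then have "(\<Sum>c\<in>{-1,0,1}. Pp r c r' * first_hit Pz Pp q m (r', nat (int i + c))) \<le> 0"
      by (intro sum_nonpos) auto
    then show False using r' by simp
  qed
  then obtain c0 where c0: "c0 \<in> {-1,0,1}" "Pp r c0 r' * first_hit Pz Pp q m (r', nat (int i + c0)) > 0"
    by blast
  have Ppos: "Pp r c0 r' > 0" and Hpos: "first_hit Pz Pp q m (r', nat (int i + c0)) > 0"
    using c0(2) Pp_nonneg[of r c0 r'] H_nonneg[of q m "(r', nat (int i + c0))"]
    by (auto simp: zero_less_mult_iff)
  obtain c where c: "c 0 = (r', nat (int i + c0))" "pth q m c" using Suc.IH[OF Hpos] by blast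
  define c' where "c' k = (if k = 0 then y else c (k - 1))" for k
  have st: "stp y (c 0)"
  proof -
    have "int (nat (int i + c0)) - int i = c0" using i c0(1) by auto
    then show ?thesis unfolding stp_def using y i Ppos c(1) by simp
  qed
  have "pth q (Suc m) c'"
    unfolding pth_def
  proof (intro conjI allI impI)
    show "c' (Suc m) = (q, 0)" using c(2) unfolding c'_def pth_def by simp
    fix k assume "k < Suc m"
    then show "stp (c' k) (c' (Suc k))"
      using st c(2) unfolding c'_def pth_def by (cases k) auto
  qed
  moreover have "c' 0 = y" unfolding c'_def by simp
  ultimately show ?case by blast
qed

lemma H_of_path:
  "pth q m c \<Longrightarrow> first_hit Pz Pp q m (c 0) \<ge> xm ^ m"
proof (induction m arbitrary: c)
  case 0
  then show ?case by (simp add: pth_def)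
next
  case (Suc m)
  have p': "pth q m (c \<circ> Suc)" using Suc.prems unfolding pth_def by auto
  have IH: "first_hit Pz Pp q m (c 1) \<ge> xm ^ m" using Suc.IH[OF p'] by simp
  obtain r i where c0: "c 0 = (r, i)" by fastforce
  obtain r' j where c1: "c 1 = (r', j)" by fastforce
  have st: "stp (c 0) (c 1)" using Suc.prems unfolding pth_def by auto
  then have i: "i > 0" and Ppos: "Pp r (int j - int i) r' > 0" using c0 c1 unfolding stp_def by auto
  define d where "d = int j - int i"
  have d: "d \<in> {-1,0,1}" using Pp_pos_c Ppos d_def by blast
  have jd: "nat (int i + d) = j" using d_def by simp
  have "xm ^ Suc m = xm * xm ^ m" by simp
  also have "\<dots> \<le> Pp r d r' * first_hit Pz Pp q m (r', j)"
    using IH c1 xm_le'[OF Ppos] xm_pos d_def by (intro mult_mono) (auto simp: H_nonneg)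
  also have "\<dots> \<le> (\<Sum>c\<in>{-1,0,1}. Pp r c r' * first_hit Pz Pp q m (r', nat (int i + c)))"
    using member_le_sum[of d "{-1,0,1}" "\<lambda>c. Pp r c r' * first_hit Pz Pp q m (r', nat (int i + c))"] d jd
    by (simp add: Pp_nonneg H_nonneg)
  also have "\<dots> \<le> (\<Sum>r''\<in>UNIV. \<Sum>c\<in>{-1,0,1}. Pp r c r'' * first_hit Pz Pp q m (r'', nat (int i + c)))"
    by (rule member_le_sum) (auto intro!: sum_nonneg mult_nonneg_nonneg simp: Pp_nonneg H_nonneg)
  also have "\<dots> = first_hit Pz Pp q (Suc m) (c 0)" using H_Suc[OF i] c0 by simp
  finally show ?case .
qed

lemma cut_loop:
  assumes p: "pth q m c" and ij: "i < j" "j \<le> m" and eq: "c i = c j"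
  shows "\<exists>c'. c' 0 = c 0 \<and> pth q (m - (j - i)) c'"
proof -
  define idx where "idx k = (if k < i then k else k + (j - i))" for k
  define c' where "c' = c \<circ> idx"
  have "c' 0 = c 0" using eq unfolding c'_def idx_def by auto
  moreover have "pth q (m - (j - i)) c'"
    unfolding pth_def
  proof (intro conjI allI impI)
    show "c' (m - (j - i)) = (q, 0)"
    proof (cases "m - (j - i) < i")
      case True
      then have "m = j" using ij by linarith
      then show ?thesis using p eq True ij unfolding c'_def idx_def pth_def by auto
    next
      case False
      then show ?thesis using p ij unfolding c'_def idx_def pth_def by auto
    qed
  next
    fix k assume k: "k < m - (j - i)"
    show "stp (c' k) (c' (Suc k))"
    proof (cases "Suc k < i")
      case True
      then show ?thesis using p ij k unfolding c'_def idx_def pth_def by auto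
    next
      case False
      show ?thesis
      proof (cases "Suc k = i")
        case True
        have "idx (Suc k) = j" using True ij unfolding idx_def by simp
        then have "c' (Suc k) = c i" "c' k = c k" unfolding c'_def idx_def using eq True by auto
        then show ?thesis using p ij True unfolding pth_def by auto
      next
        case False
        then have "k \<ge> i" using \<open>\<not> Suc k < i\<close> by simp
        then have "c' k = c (k + (j - i))" "c' (Suc k) = c (Suc (k + (j - i)))"
          unfolding c'_def idx_def by auto
        moreover have "k + (j - i) < m" using k ij by linarith
        ultimately show ?thesis using p unfolding pth_def by auto
      qed
    qed
  qed
  ultimately show ?thesis by blast
qed

end

context pctx
begin

lemma cut_mid:
  assumes p: "pth q m c"
    and ord: "a < b" "b \<le> e0" "e0 < f0" "f0 < m"
    and ca: "c a = (r1, l)" and cb: "c b = (r1, l')" and ce: "c e0 = (r2, l')" and cf: "c f0 = (r2, l)"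
    and ll: "l < l'" "0 < l"
    and mid: "\<forall>k. b \<le> k \<longrightarrow> k \<le> e0 \<longrightarrow> l' \<le> snd (c k)"
  shows "\<exists>c'. c' 0 = c 0 \<and> pth q (m - (b - a) - (f0 - e0)) c'"
proof -
  define d1 where "d1 = b - a"
  define d2 where "d2 = f0 - e0"
  define D where "D = l' - l"
  define E where "E = e0 - d1"
  define m' where "m' = m - d1 - d2"
  define c' where "c' k = (if k \<le> a then c k else if k \<le> E then (fst (c (k + d1)), snd (c (k + d1)) - D)
      else c (k + d1 + d2))" for k
  have Ed: "E + d1 = e0" "a \<le> E" using ord unfolding E_def d1_def by auto
  have mE: "E < m'" "m' + d1 + d2 = m" using ord unfolding m'_def E_def d1_def d2_def by auto
  have st: "\<And>k. k < m \<Longrightarrow> stp (c k) (c (Suc k))" using p unfolding pth_def by auto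
  have "pth q m' c'"
    unfolding pth_def
  proof (intro conjI allI impI)
    show "c' m' = (q, 0)" using mE Ed p unfolding c'_def pth_def by auto
  next
    fix k assume k: "k < m'"
    show "stp (c' k) (c' (Suc k))"
    proof (cases "Suc k \<le> a")
      case True
      then show ?thesis using st[of k] ord unfolding c'_def by auto
    next
      case nka: False
      show ?thesis
      proof (cases "k = a")
        case ka: True
        show ?thesis
        proof (cases "Suc a \<le> E")
          case True
          have c'a: "c' k = (r1, l)" using ka ca unfolding c'_def by simp
          have c'a1: "c' (Suc k) = (fst (c (Suc b)), snd (c (Suc b)) - D)"
            using ka True unfolding c'_def d1_def using ord by auto
          have s0: "stp (r1, l') (c (Suc b))" using st[of b] cb ord by auto
          have "l' \<le> snd (c (Suc b))" using mid True Ed ord unfolding d1_def by auto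
          then have "stp (r1, l' - D) (fst (c (Suc b)), snd (c (Suc b)) - D)"
            using stp_shift[of r1 l' "fst (c (Suc b))" "snd (c (Suc b))" D] s0 ll unfolding D_def by auto
          moreover have "l' - D = l" using ll unfolding D_def by simp
          ultimately show ?thesis using c'a c'a1 by simp
        next
          case False
          then have "E = a" using Ed by simp
          then have eb: "e0 = b" using Ed ord unfolding d1_def by simp
          then have r12: "r1 = r2" using cb ce by simp
          have c'a: "c' k = (r1, l)" using ka ca unfolding c'_def by simp
          have "Suc k + d1 + d2 = Suc f0" using ka eb ord unfolding d1_def d2_def by simp
          then have c'a1: "c' (Suc k) = c (Suc f0)" using ka False unfolding c'_def by simp
          have "stp (c f0) (c (Suc f0))" using st ord by simp
          then show ?thesis using c'a c'a1 cf r12 by simp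
        qed
      next
        case False
        then have ak: "a < k" using nka by simp
        show ?thesis
        proof (cases "Suc k \<le> E")
          case True
          have c1: "c' k = (fst (c (k + d1)), snd (c (k + d1)) - D)" using ak True unfolding c'_def by simp
          have c2: "c' (Suc k) = (fst (c (Suc (k + d1))), snd (c (Suc (k + d1))) - D)"
            using ak True unfolding c'_def by simp
          have kd: "b < k + d1" "Suc (k + d1) \<le> e0" using ak True Ed ord unfolding d1_def by auto
          have s0: "stp (c (k + d1)) (c (Suc (k + d1)))" using st kd ord by simp
          have h1: "l' \<le> snd (c (k + d1))" "l' \<le> snd (c (Suc (k + d1)))" using mid kd by auto
          obtain u1 v1 where u: "c (k + d1) = (u1, v1)" by fastforce
          obtain u2 v2 where v: "c (Suc (k + d1)) = (u2, v2)" by fastforce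
          have "stp (u1, v1 - D) (u2, v2 - D)"
            using stp_shift[of u1 v1 u2 v2 D] s0 u v h1 ll unfolding D_def by auto
          then show ?thesis using c1 c2 u v by simp
        next
          case False
          show ?thesis
          proof (cases "k = E")
            case True
            have c1: "c' k = (r2, l)" using True ak ce Ed ll unfolding c'_def D_def by simp
            have "Suc k + d1 + d2 = Suc f0" using True Ed ord unfolding d2_def by simp
            then have c2: "c' (Suc k) = c (Suc f0)" using True Ed unfolding c'_def by simp
            have "stp (c f0) (c (Suc f0))" using st ord by simp
            then show ?thesis using c1 c2 cf by simp
          next
            case False
            then have Ek: "E < k" using \<open>\<not> Suc k \<le> E\<close> by simp
            have c1: "c' k = c (k + d1 + d2)" "c' (Suc k) = c (Suc (k + d1 + d2))"
              using Ek ak Ed unfolding c'_def by auto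
            have "k + d1 + d2 < m" using k mE by simp
            then show ?thesis using c1 st by simp
          qed
        qed
      qed
    qed
  qed
  moreover have "c' 0 = c 0" unfolding c'_def by simp
  ultimately show ?thesis unfolding m'_def d1_def d2_def by blast
qed

end

context pctx
begin

lemma min_path_bound:
  assumes c0: "c 0 = (p, 1)" and p: "pth q m c"
    and minim: "\<And>m' c'. c' 0 = (p, 1) \<Longrightarrow> pth q m' c' \<Longrightarrow> m \<le> m'"
  shows "m \<le> CARD('q) ^ 3"
proof -
  define h where "h k = snd (c k)" for k
  define s where "s k = fst (c k)" for k
  have cs: "c k = (s k, h k)" for k unfolding h_def s_def by simp
  have st: "\<And>k. k < m \<Longrightarrow> stp (c k) (c (Suc k))" using p unfolding pth_def by auto
  have up: "\<And>k. k < m \<Longrightarrow> h (Suc k) \<le> h k + 1" and dn: "\<And>k. k < m \<Longrightarrow> h k \<le> h (Suc k) + 1"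
    using stp_step st unfolding h_def by auto
  have hpos: "\<And>k. k < m \<Longrightarrow> h k > 0" using st unfolding stp_def h_def by auto
  have hm: "h m = 0" "h 0 = 1" using p c0 unfolding pth_def h_def by auto
  define Hm where "Hm = Max (h ` {..m})"
  have Hge: "\<And>k. k \<le> m \<Longrightarrow> h k \<le> Hm" unfolding Hm_def by auto
  have "Hm \<in> h ` {..m}" unfolding Hm_def by (rule Max_in) auto
  then obtain \<tau> where tau: "\<tau> \<le> m" "h \<tau> = Hm" by auto
  let ?n = "CARD('q)"
  have HmB: "Hm \<le> ?n ^ 2"
  proof (rule ccontr)
    assume big: "\<not> Hm \<le> ?n ^ 2"
    define u where "u l = (GREATEST k. k \<le> \<tau> \<and> h k = l)" for l
    define d where "d l = (LEAST k. \<tau> \<le> k \<and> h k = l)" for l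
    have exu: "\<exists>k. k \<le> \<tau> \<and> h k = l" if "l \<in> {1..Hm}" for l
    proof -
      have "\<exists>k. 0 \<le> k \<and> k \<le> \<tau> \<and> h k = l"
        by (rule ivt_up) (use that tau hm up in auto)
      then show ?thesis by auto
    qed
    have exd: "\<exists>k. \<tau> \<le> k \<and> k \<le> m \<and> h k = l" if "l \<in> {1..Hm}" for l
      by (rule ivt_down) (use that tau hm dn in auto)
    have U: "u l \<le> \<tau> \<and> h (u l) = l \<and> (\<forall>k. k \<le> \<tau> \<and> h k = l \<longrightarrow> k \<le> u l)" if lH: "l \<in> {1..Hm}" for l
    proof -
      obtain k where k: "k \<le> \<tau> \<and> h k = l" using exu[OF lH] by blast
      have "u l \<le> \<tau> \<and> h (u l) = l" unfolding u_def
        by (rule GreatestI_nat[of _ k \<tau>]) (use k in auto)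
      moreover have "\<forall>k. k \<le> \<tau> \<and> h k = l \<longrightarrow> k \<le> u l" unfolding u_def
        by (auto intro: Greatest_le_nat[of _ _ \<tau>])
      ultimately show ?thesis by blast
    qed
    have Dd: "\<tau> \<le> d l \<and> d l \<le> m \<and> h (d l) = l \<and> (\<forall>k. \<tau> \<le> k \<and> h k = l \<longrightarrow> d l \<le> k)" if lH: "l \<in> {1..Hm}" for l
    proof -
      obtain k where k: "\<tau> \<le> k \<and> k \<le> m \<and> h k = l" using exd[OF lH] by blast
      have "\<tau> \<le> d l \<and> h (d l) = l" unfolding d_def
        by (rule LeastI[of _ k]) (use k in auto)
      moreover have "\<forall>k. \<tau> \<le> k \<and> h k = l \<longrightarrow> d l \<le> k" unfolding d_def
        by (auto intro: Least_le)
      moreover have "d l \<le> k" unfolding d_def by (rule Least_le) (use k in auto)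
      ultimately show ?thesis using k by auto
    qed
    define f where "f l = (s (u l), s (d l))" for l
    have "\<not> inj_on f {1..Hm}"
    proof
      assume "inj_on f {1..Hm}"
      then have "card {1..Hm} \<le> card (UNIV :: ('q \<times> 'q) set)"
        by (rule card_inj_on_le) auto
      then have "Hm \<le> ?n * ?n" by (simp add: UNIV_Times_UNIV[symmetric] card_cartesian_product del: UNIV_Times_UNIV)
      then show False using big by (simp add: power2_eq_square)
    qed
    then obtain l1 l2 where l12: "l1 \<in> {1..Hm}" "l2 \<in> {1..Hm}" "l1 \<noteq> l2" "f l1 = f l2"
      unfolding inj_on_def by blast
    obtain l l' where ll: "l \<in> {1..Hm}" "l' \<in> {1..Hm}" "l < l'" "f l = f l'"
    proof (cases "l1 < l2")
      case True then show ?thesis using l12 that by blast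
    next
      case False then have "l2 < l1" using l12 by simp
      then show ?thesis using l12 that by metis
    qed
    note Ul = U[OF ll(1)] and Ul' = U[OF ll(2)] and Dl = Dd[OF ll(1)] and Dl' = Dd[OF ll(2)]
    have uu: "u l < u l'"
    proof -
      obtain k where k: "u l \<le> k" "k \<le> \<tau>" "h k = l'"
        using ivt_up[of "u l" \<tau> h l'] Ul tau ll up by auto
      then have "k \<le> u l'" using Ul' by blast
      moreover have "k \<noteq> u l" using k Ul ll by auto
      ultimately show ?thesis using k by simp
    qed
    have dd: "d l' < d l"
    proof -
      obtain k where k: "\<tau> \<le> k" "k \<le> d l" "h k = l'"
        using ivt_down[of \<tau> "d l" h l'] Dl tau ll dn by auto
      then have "d l' \<le> k" using Dl' by blast
      moreover have "k \<noteq> d l" using k Dl ll by auto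
      ultimately show ?thesis using k by simp
    qed
    have dlm: "d l < m" using Dl hm ll by (metis le_neq_implies_less atLeastAtMost_iff not_one_le_zero)
    have mid: "\<forall>k. u l' \<le> k \<longrightarrow> k \<le> d l' \<longrightarrow> l' \<le> snd (c k)"
    proof (intro allI impI)
      fix k assume k: "u l' \<le> k" "k \<le> d l'"
      show "l' \<le> snd (c k)"
      proof (rule ccontr)
        assume "\<not> l' \<le> snd (c k)"
        then have hk: "h k < l'" unfolding h_def by simp
        show False
        proof (cases "k \<le> \<tau>")
          case True
          obtain k' where k': "k \<le> k'" "k' \<le> \<tau>" "h k' = l'"
            using ivt_up[of k \<tau> h l'] True hk tau ll up by auto
          then have "k' \<le> u l'" using Ul' by blast
          then have "k' = k" using k k' by linarith
          then show False using k' hk by simp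
        next
          case False
          obtain k' where k': "\<tau> \<le> k'" "k' \<le> k" "h k' = l'"
            using ivt_down[of \<tau> k h l'] False hk tau ll dn Dl' k by auto
          then have "d l' \<le> k'" using Dl' by blast
          then have "k' = k" using k k' by linarith
          then show False using k' hk by simp
        qed
      qed
    qed
    have fl: "s (u l) = s (u l')" "s (d l) = s (d l')" using ll(4) unfolding f_def by auto
    have "\<exists>c'. c' 0 = c 0 \<and> pth q (m - (u l' - u l) - (d l - d l')) c'"
    proof (rule cut_mid[OF p uu _ dd dlm, of "s (u l)" l l' "s (d l)"])
      show "u l' \<le> d l'" using Ul' Dl' by (meson le_trans)
      show "c (u l) = (s (u l), l)" using Ul cs by simp
      show "c (u l') = (s (u l), l')" using Ul' cs fl by simp
      show "c (d l') = (s (d l), l')" using Dl' cs fl by simp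
      show "c (d l) = (s (d l), l)" using Dl cs by simp
      show "l < l'" "0 < l" using ll by auto
      show "\<forall>k. u l' \<le> k \<longrightarrow> k \<le> d l' \<longrightarrow> l' \<le> snd (c k)" by (rule mid)
    qed
    then obtain c' where c': "c' 0 = c 0" "pth q (m - (u l' - u l) - (d l - d l')) c'" by blast
    have "m \<le> m - (u l' - u l) - (d l - d l')" using minim c' c0 by metis
    then show False using uu dd dlm by linarith
  qed
  have inj: "inj_on c {..<m}"
  proof (rule inj_onI)
    fix i j assume ij: "i \<in> {..<m}" "j \<in> {..<m}" "c i = c j"
    show "i = j"
    proof (rule ccontr)
      assume "i \<noteq> j"
      then consider "i < j" | "j < i" by linarith
      then show False
      proof cases
        case 1
        obtain c' where "c' 0 = c 0" "pth q (m - (j - i)) c'" using cut_loop[OF p 1] ij by auto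
        then have "m \<le> m - (j - i)" using minim c0 by metis
        then show False using 1 ij by auto
      next
        case 2
        obtain c' where "c' 0 = c 0" "pth q (m - (i - j)) c'" using cut_loop[OF p 2] ij by auto
        then have "m \<le> m - (i - j)" using minim c0 by metis
        then show False using 2 ij by auto
      qed
    qed
  qed
  have "c ` {..<m} \<subseteq> UNIV \<times> {1..Hm}"
  proof
    fix y assume "y \<in> c ` {..<m}"
    then obtain k where k: "k < m" "y = c k" by auto
    then show "y \<in> UNIV \<times> {1..Hm}" using hpos[OF k(1)] Hge[of k] cs[of k] by auto
  qed
  then have "card (c ` {..<m}) \<le> card (UNIV \<times> {1..Hm} :: ('q \<times> nat) set)"
    by (intro card_mono) auto
  then have "m \<le> ?n * Hm" using card_image[OF inj] by (simp add: card_cartesian_product)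
  also have "\<dots> \<le> ?n * ?n ^ 2" using HmB by simp
  finally show ?thesis by (simp add: power3_eq_cube power2_eq_square)
qed

lemma term_prob_lower:
  assumes "term_prob Pz Pp p q > 0"
  shows "term_prob Pz Pp p q \<ge> xm ^ (CARD('q) ^ 3)"
proof -
  have "\<exists>m. first_hit Pz Pp q m (p, 1) > 0"
  proof (rule ccontr)
    assume "\<not> ?thesis"
    then have "\<forall>m. first_hit Pz Pp q m (p, 1) = 0" using H_nonneg by (meson not_less order_antisym)
    then show False using assms unfolding term_prob_def by simp
  qed
  then obtain m where "first_hit Pz Pp q m (p, 1) > 0" by blast
  then obtain c where c: "c 0 = (p, 1)" "pth q m c" using path_of_H by blast
  define P where "P m' = (\<exists>c'. c' 0 = (p, 1) \<and> pth q m' c')" for m'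
  have Pm: "P m" using c P_def by blast
  define m0 where "m0 = (LEAST m'. P m')"
  have "P m0" unfolding m0_def by (rule LeastI[of P m, OF Pm])
  then obtain c0 where c0: "c0 0 = (p, 1)" "pth q m0 c0" unfolding P_def by blast
  have "m0 \<le> CARD('q) ^ 3"
  proof (rule min_path_bound[OF c0])
    fix m' c' assume "c' 0 = (p, 1)" "pth q m' c'"
    then have "P m'" unfolding P_def by blast
    then show "m0 \<le> m'" unfolding m0_def by (rule Least_le)
  qed
  have "xm ^ (CARD('q) ^ 3) \<le> xm ^ m0"
    using \<open>m0 \<le> _\<close> xm_pos xm_le1 by (intro power_decreasing) auto
  also have "\<dots> \<le> first_hit Pz Pp q m0 (p, 1)" using H_of_path[OF c0(2)] c0(1) by simp
  also have "\<dots> \<le> term_prob Pz Pp p q" unfolding term_prob_def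
    using sum_le_suminf[OF H_summable[of q "(p, 1)"], of "{m0}"] by (simp add: H_nonneg)
  finally show ?thesis .
qed

end

context pctx
begin

fun avoid :: "'q set \<Rightarrow> nat \<Rightarrow> 'q \<Rightarrow> real" where
  "avoid S 0 r = 1"
| "avoid S (Suc k) r = (\<Sum>r'\<in>S. X_mat Pp r r' * avoid S k r')"

lemma X_sum_le: "(\<Sum>r'\<in>A. X_mat Pp r r') \<le> 1"
proof -
  have "(\<Sum>r'\<in>A. X_mat Pp r r') \<le> (\<Sum>r'\<in>UNIV. X_mat Pp r r')"
    by (rule sum_mono2) (auto simp: X_nonneg)
  then show ?thesis using X_sum by simp
qed

lemma X_sum_minus: "(\<Sum>r'\<in>UNIV - {r1}. X_mat Pp r r') = 1 - X_mat Pp r r1"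
  using X_sum[of r] sum_diff1[of UNIV "X_mat Pp r" r1] by simp

lemma avoid_bounds: "0 \<le> avoid S k r \<and> avoid S k r \<le> 1"
proof (induction k arbitrary: r)
  case 0 then show ?case by simp
next
  case (Suc k)
  have "0 \<le> avoid S (Suc k) r" using Suc by (auto intro!: sum_nonneg mult_nonneg_nonneg simp: X_nonneg)
  moreover have "avoid S (Suc k) r \<le> (\<Sum>r'\<in>S. X_mat Pp r r' * 1)"
    using Suc by (auto intro!: sum_mono simp: X_nonneg mult_left_le)
  ultimately show ?case using X_sum_le[where A=S and r=r] by simp
qed

lemma avoid_mono: "avoid S (Suc k) r \<le> avoid S k r"
proof (induction k arbitrary: r)
  case 0 then show ?case using avoid_bounds[of S "Suc 0" r] by simp
next
  case (Suc k)
  have "avoid S (Suc (Suc k)) r = (\<Sum>r'\<in>S. X_mat Pp r r' * avoid S (Suc k) r')" by (rule avoid.simps(2))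
  also have "\<dots> \<le> (\<Sum>r'\<in>S. X_mat Pp r r' * avoid S k r')" by (intro sum_mono mult_left_mono Suc.IH X_nonneg)
  also have "\<dots> = avoid S (Suc k) r" by simp
  finally show ?case .
qed

lemma reach_out:
  assumes reach: "r \<in> U" "(r, r') \<in> (X_edges Pp)\<^sup>*" "r' \<notin> U"
  shows "\<exists>a\<in>U. \<exists>a'. (a, a') \<in> X_edges Pp \<and> a' \<notin> U"
proof (rule ccontr)
  assume "\<not> ?thesis"
  then have cl: "\<And>a a'. a \<in> U \<Longrightarrow> (a, a') \<in> X_edges Pp \<Longrightarrow> a' \<in> U" by blast
  have "r' \<in> U" using reach(2,1) by (induction rule: rtrancl_induct) (auto intro: cl)
  then show False using reach(3) by simp
qed

lemma avoid_small:
  assumes reach: "\<forall>r\<in>S. \<exists>r'. (r, r') \<in> (X_edges Pp)\<^sup>* \<and> r' \<notin> S"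
  shows "\<forall>r\<in>S. avoid S (card S) r \<le> 1 - xm ^ card S"
proof -
  define D where "D l = {r\<in>S. avoid S l r \<le> 1 - xm ^ l}" for l
  have Dsub: "D l \<subseteq> S" for l unfolding D_def by auto
  have Dmono: "D l \<subseteq> D (Suc l)" for l
  proof
    fix r assume "r \<in> D l"
    then have "r \<in> S" "avoid S l r \<le> 1 - xm ^ l" unfolding D_def by auto
    moreover have "xm ^ Suc l \<le> xm ^ l" using xm_pos xm_le1 by (simp add: mult_left_le_one_le)
    ultimately show "r \<in> D (Suc l)" unfolding D_def using avoid_mono[of S l r] by auto
  qed
  have main: "l \<le> card S \<Longrightarrow> l \<le> card (D l)" for l
  proof (induction l)
    case 0 then show ?case by simp
  next
    case (Suc l)
    have IH: "l \<le> card (D l)" using Suc by simp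
    show ?case
    proof (cases "D l = S")
      case True
      then have "D (Suc l) = S" using Dmono[of l] Dsub[of "Suc l"] by auto
      then show ?thesis using Suc by simp
    next
      case False
      then obtain r0 where r0: "r0 \<in> S - D l" using Dsub by blast
      then obtain r' where "(r0, r') \<in> (X_edges Pp)\<^sup>*" "r' \<notin> S" using reach by blast
      then have "r' \<notin> S - D l" by simp
      then obtain r r1 where rr: "r \<in> S - D l" "(r, r1) \<in> X_edges Pp" "r1 \<notin> S - D l"
        using reach_out[OF r0 \<open>(r0, r') \<in> _\<close>] by blast
      have Xr: "xm \<le> X_mat Pp r r1" using rr(2) X_ge_xm unfolding X_edges_def by auto
      have "avoid S (Suc l) r \<le> 1 - xm ^ Suc l"
      proof (cases "r1 \<in> S")
        case False
        have "avoid S (Suc l) r \<le> (\<Sum>r'\<in>S. X_mat Pp r r' * 1)"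
          by (simp only: avoid.simps) (intro sum_mono mult_left_mono, auto simp: X_nonneg avoid_bounds)
        also have "\<dots> \<le> (\<Sum>r'\<in>UNIV - {r1}. X_mat Pp r r')"
          using False by (simp, intro sum_mono2) (auto simp: X_nonneg)
        also have "\<dots> = 1 - X_mat Pp r r1" by (rule X_sum_minus)
        also have "\<dots> \<le> 1 - xm" using Xr by simp
        also have "\<dots> \<le> 1 - xm ^ Suc l"
          using xm_pos xm_le1 by (simp add: mult_left_le_one_le power_le_one)
        finally show ?thesis .
      next
        case True
        then have r1D: "r1 \<in> D l" using rr(3) by simp
        then have a1: "avoid S l r1 \<le> 1 - xm ^ l" unfolding D_def by simp
        have "avoid S (Suc l) r = X_mat Pp r r1 * avoid S l r1 + (\<Sum>r'\<in>S - {r1}. X_mat Pp r r' * avoid S l r')"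
          using True by (simp add: sum.remove)
        also have "\<dots> \<le> X_mat Pp r r1 * (1 - xm ^ l) + (\<Sum>r'\<in>S - {r1}. X_mat Pp r r' * 1)"
          by (intro add_mono mult_left_mono a1 sum_mono) (auto simp: X_nonneg avoid_bounds)
        also have "(\<Sum>r'\<in>S - {r1}. X_mat Pp r r' * 1) \<le> (\<Sum>r'\<in>UNIV - {r1}. X_mat Pp r r')"
          by (simp, intro sum_mono2) (auto simp: X_nonneg)
        also have "\<dots> = 1 - X_mat Pp r r1" by (rule X_sum_minus)
        also have "X_mat Pp r r1 * (1 - xm ^ l) + (1 - X_mat Pp r r1) = 1 - X_mat Pp r r1 * xm ^ l"
          by (simp add: algebra_simps)
        also have "\<dots> \<le> 1 - xm * xm ^ l"
          using Xr xm_pos by (simp add: mult_right_mono)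
        finally show ?thesis by simp
      qed
      then have "r \<in> D (Suc l)" using rr(1) unfolding D_def by simp
      then have "insert r (D l) \<subseteq> D (Suc l)" using Dmono by blast
      then have "card (insert r (D l)) \<le> card (D (Suc l))"
        by (intro card_mono) auto
      moreover have "card (insert r (D l)) = Suc (card (D l))" using rr(1) by (simp add: card_insert_if)
      ultimately show ?thesis using IH by simp
    qed
  qed
  have "card (D (card S)) \<ge> card S" using main by simp
  then have "D (card S) = S" using Dsub[of "card S"] by (meson card_seteq finite)
  then show ?thesis unfolding D_def by auto
qed

lemma mp_bound:
  fixes Bb :: real
  assumes reach: "\<forall>r\<in>S. \<exists>r'. (r, r') \<in> (X_edges Pp)\<^sup>* \<and> r' \<notin> S"
    and sol: "\<forall>r\<in>S. h r = b r + (\<Sum>r'\<in>S. X_mat Pp r r' * h r')"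
    and bb: "\<forall>r\<in>S. \<bar>b r\<bar> \<le> Bb" and Bb: "Bb \<ge> 0"
  shows "\<forall>r\<in>S. \<bar>h r\<bar> \<le> card S * Bb / xm ^ card S"
proof (cases "S = {}")
  case True then show ?thesis by simp
next
  case False
  define mx where "mx = Max ((\<lambda>r. \<bar>h r\<bar>) ` S)"
  have mxge: "\<And>r. r \<in> S \<Longrightarrow> \<bar>h r\<bar> \<le> mx" unfolding mx_def by auto
  have "mx \<in> (\<lambda>r. \<bar>h r\<bar>) ` S" unfolding mx_def using False by (intro Max_in) auto
  then obtain rs where rs: "rs \<in> S" "\<bar>h rs\<bar> = mx" by auto
  have mx0: "mx \<ge> 0" using rs by auto
  have it: "\<forall>r\<in>S. \<bar>h r\<bar> \<le> k * Bb + avoid S k r * mx" for k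
  proof (induction k)
    case 0 then show ?case using mxge by simp
  next
    case (Suc k)
    show ?case
    proof
      fix r assume r: "r \<in> S"
      have "\<bar>h r\<bar> \<le> \<bar>b r\<bar> + \<bar>\<Sum>r'\<in>S. X_mat Pp r r' * h r'\<bar>" using sol r by (metis abs_triangle_ineq)
      also have "\<dots> \<le> Bb + (\<Sum>r'\<in>S. X_mat Pp r r' * (k * Bb + avoid S k r' * mx))"
      proof (intro add_mono)
        show "\<bar>b r\<bar> \<le> Bb" using bb r by simp
        have "\<bar>\<Sum>r'\<in>S. X_mat Pp r r' * h r'\<bar> \<le> (\<Sum>r'\<in>S. \<bar>X_mat Pp r r' * h r'\<bar>)" by (rule sum_abs)
        also have "\<dots> \<le> (\<Sum>r'\<in>S. X_mat Pp r r' * (k * Bb + avoid S k r' * mx))"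
          using Suc by (intro sum_mono) (auto simp: abs_mult X_nonneg intro!: mult_left_mono)
        finally show "\<bar>\<Sum>r'\<in>S. X_mat Pp r r' * h r'\<bar> \<le> (\<Sum>r'\<in>S. X_mat Pp r r' * (k * Bb + avoid S k r' * mx))" .
      qed
      also have "Bb + (\<Sum>r'\<in>S. X_mat Pp r r' * (k * Bb + avoid S k r' * mx)) =
          Bb + (k * Bb) * (\<Sum>r'\<in>S. X_mat Pp r r') + avoid S (Suc k) r * mx"
        by (simp add: algebra_simps sum.distrib sum_distrib_left sum_distrib_right)
      also have "\<dots> \<le> Bb + k * Bb + avoid S (Suc k) r * mx"
        using X_sum_le[where A=S and r=r] Bb by (simp add: mult_left_le)
      finally have "\<bar>h r\<bar> \<le> Bb + k * Bb + avoid S (Suc k) r * mx" .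
      then show "\<bar>h r\<bar> \<le> (Suc k) * Bb + avoid S (Suc k) r * mx" by (simp add: algebra_simps)
    qed
  qed
  let ?L = "card S"
  have "mx \<le> ?L * Bb + avoid S ?L rs * mx" using it[of ?L] rs by auto
  also have "\<dots> \<le> ?L * Bb + (1 - xm ^ ?L) * mx"
    using avoid_small[OF reach] rs mx0 by (simp add: mult_right_mono)
  finally have "xm ^ ?L * mx \<le> ?L * Bb" by (simp add: algebra_simps)
  then have "mx \<le> ?L * Bb / xm ^ ?L" using xm_pos by (simp add: field_simps)
  then show ?thesis using mxge by force
qed

lemma mp_exists:
  assumes reach: "\<forall>r\<in>S. \<exists>r'. (r, r') \<in> (X_edges Pp)\<^sup>* \<and> r' \<notin> S"
  shows "\<exists>h. \<forall>r\<in>S. h r = b r + (\<Sum>r'\<in>S. X_mat Pp r r' * h r')"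
proof -
  define \<Phi> :: "real^'q \<Rightarrow> real^'q" where
    "\<Phi> v = (\<chi> r. if r \<in> S then v $ r - (\<Sum>r'\<in>S. X_mat Pp r r' * v $ r') else v $ r)" for v
  have lin: "linear \<Phi>"
    by (rule linearI) (auto simp: \<Phi>_def vec_eq_iff algebra_simps sum.distrib sum_distrib_left)
  have inj: "inj \<Phi>"
  proof -
    have "v = 0" if "\<Phi> v = 0" for v
    proof -
      have out: "v $ r = 0" if rS: "r \<notin> S" for r
      proof -
        have "\<Phi> v $ r = 0" using \<open>\<Phi> v = 0\<close> by simp
        then show ?thesis using rS unfolding \<Phi>_def by simp
      qed
      have solv: "\<forall>r\<in>S. v $ r = 0 + (\<Sum>r'\<in>S. X_mat Pp r r' * v $ r')"
      proof
        fix r assume rS: "r \<in> S"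
        have "\<Phi> v $ r = 0" using \<open>\<Phi> v = 0\<close> by simp
        then show "v $ r = 0 + (\<Sum>r'\<in>S. X_mat Pp r r' * v $ r')" using rS unfolding \<Phi>_def by simp
      qed
      have "\<forall>r\<in>S. \<bar>v $ r\<bar> \<le> real (card S) * 0 / xm ^ card S"
        by (rule mp_bound[OF reach solv]) auto
      then show "v = 0" using out by (auto simp: vec_eq_iff)
    qed
    then show ?thesis using lin by (simp add: linear_injective_0)
  qed
  have "surj \<Phi>" using linear_injective_imp_surjective[OF lin inj] by simp
  then obtain v where v: "\<Phi> v = (\<chi> r. b r)" by (metis surjD)
  show ?thesis
  proof (intro exI ballI)
    fix r assume "r \<in> S"
    then show "v $ r = b r + (\<Sum>r'\<in>S. X_mat Pp r r' * v $ r')"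
    proof -
      have "\<Phi> v $ r = b r" using v by simp
      then show ?thesis using \<open>r \<in> S\<close> unfolding \<Phi>_def by simp
    qed
  qed
qed

end

locale bctx = pctx dz dp Pz Pp
  for dz dp :: "('q::finite \<times> int \<times> 'q) set" and Pz Pp :: "'q \<Rightarrow> int \<Rightarrow> 'q \<Rightarrow> real" +
  fixes B :: "'q set" and \<alpha> :: "'q \<Rightarrow> real"
  assumes bscc: "is_bscc Pp B" and inv: "is_inv_dist Pp B \<alpha>"
begin

abbreviation "t \<equiv> trend Pp B \<alpha>"

lemma B_closed: "r \<in> B \<Longrightarrow> X_mat Pp r r' > 0 \<Longrightarrow> r' \<in> B"
  using bscc unfolding is_bscc_def X_edges_def by auto

lemma B_closed_Pp: "r \<in> B \<Longrightarrow> Pp r c r' > 0 \<Longrightarrow> r' \<in> B"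
proof -
  assume r: "r \<in> B" and c: "Pp r c r' > 0"
  then have "c \<in> {-1,0,1}" using Pp_pos_c by blast
  then have "Pp r c r' \<le> X_mat Pp r r'" unfolding X_mat_def
    by (intro member_le_sum) (auto simp: Pp_nonneg)
  then show ?thesis using B_closed[OF r] c by simp
qed

lemma B_conn: "r \<in> B \<Longrightarrow> r' \<in> B \<Longrightarrow> (r, r') \<in> (X_edges Pp)\<^sup>*"
  using bscc unfolding is_bscc_def by blast

lemma B_ne: "B \<noteq> {}" using bscc unfolding is_bscc_def by blast

lemma alpha_nonneg: "r \<in> B \<Longrightarrow> \<alpha> r \<ge> 0" and alpha_sum: "(\<Sum>r\<in>B. \<alpha> r) = 1"
  and alpha_inv: "r' \<in> B \<Longrightarrow> (\<Sum>r\<in>B. \<alpha> r * X_mat Pp r r') = \<alpha> r'"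
  using inv unfolding is_inv_dist_def by auto

lemma t_abs: "\<bar>t\<bar> \<le> 1"
proof -
  have "\<bar>t\<bar> \<le> (\<Sum>r\<in>B. \<bar>\<alpha> r * drift Pp r\<bar>)" unfolding trend_def by (rule sum_abs)
  also have "\<dots> \<le> (\<Sum>r\<in>B. \<alpha> r * 1)"
    by (intro sum_mono) (auto simp: abs_mult alpha_nonneg drift_abs intro!: mult_left_le)
  finally show ?thesis using alpha_sum by simp
qed

lemma X_outside_B: "r \<in> B \<Longrightarrow> r' \<notin> B \<Longrightarrow> X_mat Pp r r' = 0"
  using B_closed[of r r'] X_nonneg[of r r'] by force

lemma poisson:
  "\<exists>g. (\<forall>r\<in>B. g r = drift Pp r - t + (\<Sum>r'\<in>UNIV. X_mat Pp r r' * g r')) \<and>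
       (\<forall>r. \<bar>g r\<bar> \<le> 2 * real (CARD('q) - 1) / xm ^ (CARD('q) - 1))"
proof -
  have "\<exists>r0\<in>B. \<alpha> r0 > 0"
  proof (rule ccontr)
    assume "\<not> ?thesis"
    then have "\<forall>r\<in>B. \<alpha> r = 0" using alpha_nonneg by force
    then show False using alpha_sum by simp
  qed
  then obtain r0 where r0: "r0 \<in> B" "\<alpha> r0 > 0" by blast
  define S where "S = B - {r0}"
  have reach: "\<forall>r\<in>S. \<exists>r'. (r, r') \<in> (X_edges Pp)\<^sup>* \<and> r' \<notin> S"
    using B_conn r0 unfolding S_def by blast
  define b where "b r = drift Pp r - t" for r
  have bb: "\<forall>r\<in>S. \<bar>b r\<bar> \<le> 2" unfolding b_def
  proof
    fix r assume "r \<in> S" show "\<bar>drift Pp r - t\<bar> \<le> 2" using drift_abs[of r] t_abs by linarith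
  qed
  obtain h where h: "\<forall>r\<in>S. h r = b r + (\<Sum>r'\<in>S. X_mat Pp r r' * h r')"
    using mp_exists[OF reach] by blast
  have hb: "\<forall>r\<in>S. \<bar>h r\<bar> \<le> real (card S) * 2 / xm ^ card S"
    by (rule mp_bound[OF reach h bb]) simp
  define g where "g r = (if r \<in> S then h r else 0)" for r
  have gsum: "(\<Sum>r'\<in>UNIV. X_mat Pp r r' * g r') = (\<Sum>r'\<in>S. X_mat Pp r r' * h r')" for r
  proof -
    have "(\<Sum>r'\<in>UNIV. X_mat Pp r r' * g r') = (\<Sum>r'\<in>S. X_mat Pp r r' * g r')"
      by (rule sum.mono_neutral_right) (auto simp: g_def)
    then show ?thesis by (simp add: g_def)
  qed
  define \<delta> where "\<delta> r = drift Pp r - t + (\<Sum>r'\<in>UNIV. X_mat Pp r r' * g r') - g r" for r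
  have \<delta>S: "\<delta> r = 0" if "r \<in> S" for r
    using h that unfolding \<delta>_def gsum by (simp add: g_def b_def)
  have tot: "(\<Sum>r\<in>B. \<alpha> r * \<delta> r) = 0"
  proof -
    have e1: "(\<Sum>r\<in>B. \<alpha> r * drift Pp r) = t" unfolding trend_def by simp
    have e2: "(\<Sum>r\<in>B. \<alpha> r * t) = t" using alpha_sum by (simp add: sum_distrib_right[symmetric])
    have "(\<Sum>r\<in>B. \<alpha> r * (\<Sum>r'\<in>UNIV. X_mat Pp r r' * g r')) = (\<Sum>r'\<in>UNIV. \<Sum>r\<in>B. \<alpha> r * X_mat Pp r r' * g r')"
      by (simp add: sum_distrib_left mult.assoc sum.swap[of _ B])
    also have "\<dots> = (\<Sum>r'\<in>B. \<Sum>r\<in>B. \<alpha> r * X_mat Pp r r' * g r')"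
      by (rule sum.mono_neutral_right) (auto simp: X_outside_B)
    also have "\<dots> = (\<Sum>r'\<in>B. \<alpha> r' * g r')"
      by (rule sum.cong[OF refl]) (simp add: sum_distrib_right[symmetric] alpha_inv)
    finally have e3: "(\<Sum>r\<in>B. \<alpha> r * (\<Sum>r'\<in>UNIV. X_mat Pp r r' * g r')) = (\<Sum>r\<in>B. \<alpha> r * g r)" .
    have "(\<Sum>r\<in>B. \<alpha> r * \<delta> r) = (\<Sum>r\<in>B. \<alpha> r * drift Pp r) - (\<Sum>r\<in>B. \<alpha> r * t)
        + (\<Sum>r\<in>B. \<alpha> r * (\<Sum>r'\<in>UNIV. X_mat Pp r r' * g r')) - (\<Sum>r\<in>B. \<alpha> r * g r)"
      unfolding \<delta>_def by (simp add: algebra_simps sum.distrib sum_subtractf)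
    then show ?thesis using e1 e2 e3 by simp
  qed
  have "(\<Sum>r\<in>B. \<alpha> r * \<delta> r) = \<alpha> r0 * \<delta> r0 + (\<Sum>r\<in>S. \<alpha> r * \<delta> r)"
    unfolding S_def using r0 by (simp add: sum.remove)
  then have "\<alpha> r0 * \<delta> r0 = 0" using tot \<delta>S by simp
  then have \<delta>0: "\<delta> r0 = 0" using r0 by simp
  have eq: "\<forall>r\<in>B. g r = drift Pp r - t + (\<Sum>r'\<in>UNIV. X_mat Pp r r' * g r')"
  proof
    fix r assume "r \<in> B"
    then have "\<delta> r = 0" using \<delta>S \<delta>0 unfolding S_def by (cases "r = r0") auto
    then show "g r = drift Pp r - t + (\<Sum>r'\<in>UNIV. X_mat Pp r r' * g r')" unfolding \<delta>_def by simp
  qed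
  have cS: "card S \<le> CARD('q) - 1"
  proof -
    have "card S = card B - 1" unfolding S_def using r0 by simp
    moreover have "card B \<le> CARD('q)" by (rule card_mono) auto
    ultimately show ?thesis by simp
  qed
  have bnd: "\<forall>r. \<bar>g r\<bar> \<le> 2 * real (CARD('q) - 1) / xm ^ (CARD('q) - 1)"
  proof
    fix r
    show "\<bar>g r\<bar> \<le> 2 * real (CARD('q) - 1) / xm ^ (CARD('q) - 1)"
    proof (cases "r \<in> S")
      case False then show ?thesis using xm_pos by (simp add: g_def)
    next
      case True
      have "\<bar>g r\<bar> \<le> real (card S) * 2 / xm ^ card S" using hb True by (simp add: g_def)
      also have "\<dots> \<le> real (CARD('q) - 1) * 2 / xm ^ (CARD('q) - 1)"
      proof (rule frac_le)
        have "real (card S) \<le> real (CARD('q) - 1)" using cS by (simp only: of_nat_le_iff)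
        then show "real (card S) * 2 \<le> real (CARD('q) - 1) * 2" by linarith
        show "0 < xm ^ (CARD('q) - 1)" using xm_pos by simp
        show "xm ^ (CARD('q) - 1) \<le> xm ^ card S" using cS xm_pos xm_le1 by (intro power_decreasing) auto
      qed simp
      finally show ?thesis by (simp add: mult.commute)
    qed
  qed
  show ?thesis using eq bnd by blast
qed

end

lemma exp_quad: fixes y :: real assumes "\<bar>y\<bar> \<le> 1" shows "exp y \<le> 1 + y + y^2"
proof (cases "y \<ge> 0")
  case True then show ?thesis using exp_bound assms by auto
next
  case False
  define z where "z = - y"
  have z: "0 \<le> z" "z \<le> 1" using False assms unfolding z_def by auto
  have l: "1 + z + z^2/2 \<le> exp z" using exp_lower_Taylor_quadratic z by simp
  then have l2: "2 + 2 * z + z^2 \<le> 2 * exp z" by simp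
  have "2 \<le> (1 - z + z^2) * (2 + 2 * z + z^2)"
  proof -
    have "(1 - z + z^2) * (2 + 2 * z + z^2) = 2 + z^2 + z^3 + z^4"
      by (simp add: algebra_simps power2_eq_square power3_eq_cube power4_eq_xxxx)
    moreover have "0 \<le> z^2 + z^3 + z^4" using z by simp
    ultimately show ?thesis by simp
  qed
  also have "\<dots> \<le> (1 - z + z^2) * (2 * exp z)"
  proof (rule mult_left_mono[OF l2])
    have "z^2 \<le> z" using z by (simp add: power2_eq_square mult_left_le_one_le)
    then show "0 \<le> 1 - z + z^2" using z by simp
  qed
  finally have "1 \<le> (1 - z + z^2) * exp z" by simp
  then have "exp (-z) \<le> 1 - z + z^2"
    by (simp add: exp_minus field_simps)
  then show ?thesis unfolding z_def by simp
qed

lemma sum_m_rho: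
  fixes \<rho> :: real
  shows "(\<Sum>m\<le>M. real m * \<rho> ^ m) * (1 - \<rho>)^2 = \<rho> - (M + 1) * \<rho> ^ (M + 1) + M * \<rho> ^ (M + 2)"
proof (induction M)
  case 0 then show ?case by simp
next
  case (Suc M)
  have "(\<Sum>m\<le>Suc M. real m * \<rho> ^ m) * (1 - \<rho>)^2 =
        (\<Sum>m\<le>M. real m * \<rho> ^ m) * (1 - \<rho>)^2 + real (Suc M) * \<rho> ^ Suc M * (1 - \<rho>)^2"
    by (simp add: algebra_simps)
  also have "\<dots> = \<rho> - (M + 1) * \<rho> ^ (M + 1) + M * \<rho> ^ (M + 2) + real (Suc M) * \<rho> ^ Suc M * (1 - \<rho>)^2"
    using Suc by simp
  also have "\<dots> = \<rho> - (Suc M + 1) * \<rho> ^ (Suc M + 1) + (Suc M) * \<rho> ^ (Suc M + 2)"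
    by (simp add: algebra_simps power2_eq_square)
  finally show ?case by simp
qed

lemma sum_m_rho_le:
  fixes \<rho> :: real
  assumes "0 \<le> \<rho>" "\<rho> < 1"
  shows "(\<Sum>m\<le>M. real m * \<rho> ^ m) \<le> \<rho> / (1 - \<rho>)^2"
proof -
  have "\<rho> - (M + 1) * \<rho> ^ (M + 1) + M * \<rho> ^ (M + 2) \<le> \<rho>"
  proof -
    have h1: "M * \<rho> ^ (M + 2) \<le> M * \<rho> ^ (M + 1)"
      using assms by (intro mult_left_mono power_decreasing) auto
    have h2: "M * \<rho> ^ (M + 1) \<le> (M + 1) * \<rho> ^ (M + 1)"
      using assms by (intro mult_right_mono) auto
    from h1 h2 show ?thesis by linarith
  qed
  moreover have "(\<Sum>m\<le>M. real m * \<rho> ^ m) * (1 - \<rho>)^2 = \<rho> - (M + 1) * \<rho> ^ (M + 1) + M * \<rho> ^ (M + 2)"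
    using sum_m_rho[of \<rho> M] by simp
  ultimately have "(\<Sum>m\<le>M. real m * \<rho> ^ m) * (1 - \<rho>)^2 \<le> \<rho>" by linarith
  then show ?thesis using assms by (simp add: field_simps)
qed

lemma rho_bound:
  fixes b :: real
  assumes "b > 0"
  shows "exp (- b) / (1 - exp (- b))^2 \<le> (1 + b)^2 / b^2"
proof -
  have e: "exp (- b) \<le> 1 / (1 + b)"
  proof -
    have "1 + b \<le> exp b" by (rule exp_ge_add_one_self)
    then show ?thesis using assms by (simp add: exp_minus field_simps)
  qed
  have l: "b / (1 + b) \<le> 1 - exp (- b)"
  proof -
    have "1 / (1 + b) = 1 - b / (1 + b)" using assms by (simp add: field_simps)
    then show ?thesis using e by simp
  qed
  have p: "0 < b / (1 + b)" using assms by simp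
  have "exp (- b) / (1 - exp (- b))^2 \<le> 1 / (1 - exp (- b))^2"
    using exp_le_one_iff[of "-b"] assms by (intro divide_right_mono) auto
  also have "\<dots> \<le> 1 / (b / (1 + b))^2"
    using l p by (intro divide_left_mono power_mono mult_pos_pos) auto
  also have "\<dots> = (1 + b)^2 / b^2" using assms by (simp add: field_simps power2_eq_square)
  finally show ?thesis .
qed

context bctx
begin

lemma one_step:
  fixes g :: "'q \<Rightarrow> real" and G0 \<mu> :: real
  assumes geq: "\<forall>r\<in>B. g r = drift Pp r - t + (\<Sum>r'\<in>UNIV. X_mat Pp r r' * g r')"
    and gb: "\<forall>r. \<bar>g r\<bar> \<le> G0"
    and mu: "\<bar>\<mu>\<bar> * (2 + 2 * G0) \<le> 1"
    and r: "r \<in> B"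
  shows "(\<Sum>r'\<in>UNIV. \<Sum>c\<in>{-1,0,1}. Pp r c r' * exp (\<mu> * (of_int c + g r' - g r)))
          \<le> exp (\<mu> * t + \<mu>^2 * (2 + 2 * G0)^2)"
proof -
  define cc where "cc = 2 + 2 * G0"
  define D where "D c r' = of_int c + g r' - g r - t" for c :: int and r'
  have Db: "\<bar>D c r'\<bar> \<le> cc" if "c \<in> {-1,0,1}" for c r'
  proof -
    have "\<bar>(of_int c :: real)\<bar> \<le> 1" using that by auto
    then show ?thesis unfolding D_def cc_def using gb[rule_format, of r'] gb[rule_format, of r] t_abs by linarith
  qed
  have tm: "Pp r c r' * exp (\<mu> * (of_int c + g r' - g r)) \<le>
      Pp r c r' * (exp (\<mu> * t) * (1 + \<mu> * D c r' + \<mu>^2 * cc^2))" if "c \<in> {-1,0,1}" for c r'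
  proof -
    have "\<bar>\<mu> * D c r'\<bar> \<le> \<bar>\<mu>\<bar> * cc" using Db[OF that] by (simp add: abs_mult mult_left_mono)
    then have a: "\<bar>\<mu> * D c r'\<bar> \<le> 1" using mu unfolding cc_def by linarith
    have "(\<mu> * D c r')^2 \<le> (\<bar>\<mu>\<bar> * cc)^2"
      using \<open>\<bar>\<mu> * D c r'\<bar> \<le> \<bar>\<mu>\<bar> * cc\<close> by (metis abs_ge_zero power2_abs power_mono)
    then have b: "(\<mu> * D c r')^2 \<le> \<mu>^2 * cc^2" by (simp add: power_mult_distrib)
    have "exp (\<mu> * (of_int c + g r' - g r)) = exp (\<mu> * t) * exp (\<mu> * D c r')"
      unfolding D_def by (simp add: exp_add[symmetric] algebra_simps)
    also have "\<dots> \<le> exp (\<mu> * t) * (1 + \<mu> * D c r' + \<mu>^2 * cc^2)"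
      using exp_quad[OF a] b by (intro mult_left_mono) auto
    finally show ?thesis by (intro mult_left_mono) (auto simp: Pp_nonneg)
  qed
  have zero: "(\<Sum>r'\<in>UNIV. \<Sum>c\<in>{-1,0,1}. Pp r c r' * D c r') = 0"
  proof -
    have "(\<Sum>r'\<in>UNIV. \<Sum>c\<in>{-1,0,1}. Pp r c r' * D c r') =
       (\<Sum>r'\<in>UNIV. \<Sum>c\<in>{-1,0,1}. Pp r c r' * of_int c) + (\<Sum>r'\<in>UNIV. X_mat Pp r r' * g r')
        - (g r + t) * (\<Sum>r'\<in>UNIV. \<Sum>c\<in>{-1,0,1}. Pp r c r')"
      unfolding D_def X_mat_def
      by (simp add: algebra_simps sum.distrib sum_subtractf sum_distrib_left sum_distrib_right)
    also have "\<dots> = 0" using geq r Pp_sum drift_alt by simp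
    finally show ?thesis .
  qed
  have "(\<Sum>r'\<in>UNIV. \<Sum>c\<in>{-1,0,1}. Pp r c r' * exp (\<mu> * (of_int c + g r' - g r))) \<le>
      (\<Sum>r'\<in>UNIV. \<Sum>c\<in>{-1,0,1}. Pp r c r' * (exp (\<mu> * t) * (1 + \<mu> * D c r' + \<mu>^2 * cc^2)))"
    by (intro sum_mono tm) auto
  also have "\<dots> = exp (\<mu> * t) * ((1 + \<mu>^2 * cc^2) * (\<Sum>r'\<in>UNIV. \<Sum>c\<in>{-1,0,1}. Pp r c r')
        + \<mu> * (\<Sum>r'\<in>UNIV. \<Sum>c\<in>{-1,0,1}. Pp r c r' * D c r'))"
    by (simp add: algebra_simps sum.distrib sum_distrib_left sum_distrib_right)
  also have "\<dots> = exp (\<mu> * t) * (1 + \<mu>^2 * cc^2)" using zero Pp_sum by simp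
  also have "\<dots> \<le> exp (\<mu> * t) * exp (\<mu>^2 * cc^2)"
    by (intro mult_left_mono) (auto simp: exp_ge_add_one_self add.commute)
  also have "\<dots> = exp (\<mu> * t + \<mu>^2 * (2 + 2 * G0)^2)" unfolding cc_def by (simp add: exp_add)
  finally show ?thesis .
qed

lemma chernoff:
  fixes g :: "'q \<Rightarrow> real" and G0 \<mu> :: real
  assumes geq: "\<forall>r\<in>B. g r = drift Pp r - t + (\<Sum>r'\<in>UNIV. X_mat Pp r r' * g r')"
    and gb: "\<forall>r. \<bar>g r\<bar> \<le> G0"
    and mu: "\<bar>\<mu>\<bar> * (2 + 2 * G0) \<le> 1"
    and qB: "q \<in> B"
  shows "r \<in> B \<Longrightarrow> first_hit Pz Pp q m (r, i) \<le>
     exp (\<mu> * (real i + g r - g q) + real m * (\<mu> * t + \<mu>^2 * (2 + 2 * G0)^2))"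
proof (induction m arbitrary: r i)
  case 0 then show ?case by auto
next
  case (Suc m)
  define lam where "lam = \<mu> * t + \<mu>^2 * (2 + 2 * G0)^2"
  show ?case
  proof (cases "i = 0")
    case True then show ?thesis by simp
  next
    case False
    then have i: "i > 0" by simp
    define A where "A = exp (\<mu> * (real i + g r - g q) + real m * lam)"
    have tb: "Pp r c r' * first_hit Pz Pp q m (r', nat (int i + c)) \<le>
        A * (Pp r c r' * exp (\<mu> * (of_int c + g r' - g r)))" if c: "c \<in> {-1,0,1}" for c r'
    proof (cases "Pp r c r' > 0")
      case False
      then have "Pp r c r' = 0" using Pp_nonneg[of r c r'] by linarith
      then show ?thesis by simp
    next
      case True
      then have r'B: "r' \<in> B" using B_closed_Pp Suc.prems by blast
      have ni: "real (nat (int i + c)) = real i + of_int c" using i c by auto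
      have "first_hit Pz Pp q m (r', nat (int i + c)) \<le>
          exp (\<mu> * (real i + of_int c + g r' - g q) + real m * lam)"
        using Suc.IH[OF r'B, of "nat (int i + c)"] ni unfolding lam_def by (simp add: add.assoc)
      also have "\<dots> = A * exp (\<mu> * (of_int c + g r' - g r))"
        unfolding A_def by (simp add: exp_add[symmetric] algebra_simps)
      finally have "Pp r c r' * first_hit Pz Pp q m (r', nat (int i + c)) \<le> Pp r c r' * (A * exp (\<mu> * (of_int c + g r' - g r)))"
        by (rule mult_left_mono) (simp add: Pp_nonneg)
      then show ?thesis by (simp add: mult.left_commute)
    qed
    have "first_hit Pz Pp q (Suc m) (r, i) =
        (\<Sum>r'\<in>UNIV. \<Sum>c\<in>{-1,0,1}. Pp r c r' * first_hit Pz Pp q m (r', nat (int i + c)))"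
      by (rule H_Suc[OF i])
    also have "\<dots> \<le> (\<Sum>r'\<in>UNIV. \<Sum>c\<in>{-1,0,1}. A * (Pp r c r' * exp (\<mu> * (of_int c + g r' - g r))))"
      by (intro sum_mono tb) auto
    also have "\<dots> = A * (\<Sum>r'\<in>UNIV. \<Sum>c\<in>{-1,0,1}. Pp r c r' * exp (\<mu> * (of_int c + g r' - g r)))"
      by (simp only: sum_distrib_left)
    also have "\<dots> \<le> A * exp lam"
      using one_step[OF geq gb mu Suc.prems] unfolding lam_def A_def by (intro mult_left_mono) auto
    also have "\<dots> = exp (\<mu> * (real i + g r - g q) + real (Suc m) * lam)"
      unfolding A_def by (simp add: exp_add[symmetric] algebra_simps)
    finally show ?thesis unfolding lam_def .
  qed
qed

end

context bctx
begin

lemma S1_B: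
  fixes g :: "'q \<Rightarrow> real" and G0 :: real
  assumes geq: "\<forall>r\<in>B. g r = drift Pp r - t + (\<Sum>r'\<in>UNIV. X_mat Pp r r' * g r')"
    and gb: "\<forall>r. \<bar>g r\<bar> \<le> G0"
    and qB: "q \<in> B" and t0: "t \<noteq> 0" and r: "r \<in> B"
  shows "(\<Sum>m\<le>M. real m * first_hit Pz Pp q m (r, i)) \<le>
     4 * real i / \<bar>t\<bar> + 2 * (1 + 9 * t^2 / (64 * (2 + 2 * G0)^2))^2 / (9 * t^2 / (64 * (2 + 2 * G0)^2))^2"
proof -
  define cc where "cc = 2 + 2 * G0"
  have G0: "G0 \<ge> 0" using gb by (meson abs_ge_zero order_trans)
  have cc2: "cc \<ge> 2" unfolding cc_def using G0 by simp
  define T where "T = \<bar>t\<bar>"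
  have T: "T > 0" "T \<le> 1" "T^2 = t^2" using t0 t_abs unfolding T_def by auto
  define \<mu> where "\<mu> = - (3/8) * t / cc^2"
  define b where "b = 9 * t^2 / (64 * cc^2)"
  have b: "b > 0" unfolding b_def using t0 cc2 by simp
  have amu: "\<bar>\<mu>\<bar> = (3/8) * T / cc^2" unfolding \<mu>_def T_def by (simp add: abs_mult abs_divide)
  have mu1: "\<bar>\<mu>\<bar> * (2 + 2 * G0) \<le> 1"
  proof -
    have "\<bar>\<mu>\<bar> * (2 + 2 * G0) = (3/8) * T / cc" unfolding amu cc_def[symmetric] using cc2
      by (simp add: power2_eq_square field_simps)
    also have "\<dots> \<le> (3/8) * 1 / 2" using T cc2 by (intro frac_le) auto
    finally show ?thesis by simp
  qed
  have lam: "\<mu> * t + \<mu>^2 * (2 + 2 * G0)^2 = -(15/64) * t^2 / cc^2"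
    unfolding \<mu>_def cc_def[symmetric] using cc2 by (simp add: power2_eq_square field_simps)
  have muG: "\<bar>\<mu>\<bar> * (2 * G0) \<le> 3/16"
  proof -
    have "\<bar>\<mu>\<bar> * (2 * G0) \<le> \<bar>\<mu>\<bar> * cc" unfolding cc_def by (intro mult_left_mono) auto
    also have "\<bar>\<mu>\<bar> * cc = (3/8) * T / cc" unfolding amu using cc2 by (simp add: power2_eq_square field_simps)
    also have "\<dots> \<le> (3/8) * 1 / 2" using T cc2 by (intro frac_le) auto
    finally show ?thesis by simp
  qed
  have e316: "exp (3/16 :: real) \<le> 2"
  proof -
    have "exp (3/16 :: real) \<le> 1 + 3/16 + (3/16)^2" by (rule exp_bound) auto
    then show ?thesis by (simp add: power2_eq_square)
  qed
  define \<rho> where "\<rho> = exp (- b)"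
  have \<rho>: "0 \<le> \<rho>" "\<rho> < 1" unfolding \<rho>_def using b by auto
  have pt: "real m * first_hit Pz Pp q m (r, i) \<le>
      (4 * real i / T) * first_hit Pz Pp q m (r, i) + 2 * (real m * \<rho> ^ m)" for m
  proof (cases "4 * real i \<le> real m * T")
    case True
    have ch: "first_hit Pz Pp q m (r, i) \<le> exp (\<mu> * (real i + g r - g q) + real m * (-(15/64) * t^2 / cc^2))"
      using chernoff[OF geq gb mu1 qB r, of m i] lam by simp
    have ex: "\<mu> * (real i + g r - g q) + real m * (-(15/64) * t^2 / cc^2) \<le> 3/16 + (- b) * real m"
    proof -
      have "\<mu> * (real i + g r - g q) \<le> \<bar>\<mu>\<bar> * real i + \<bar>\<mu>\<bar> * (2 * G0)"
      proof -
        have "\<mu> * (real i + g r - g q) \<le> \<bar>\<mu> * (real i + g r - g q)\<bar>" by simp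
        also have "\<dots> = \<bar>\<mu>\<bar> * \<bar>real i + g r - g q\<bar>" by (simp add: abs_mult)
        also have "\<dots> \<le> \<bar>\<mu>\<bar> * (real i + 2 * G0)"
          using gb[rule_format, of r] gb[rule_format, of q] by (intro mult_left_mono) auto
        finally show ?thesis by (simp add: algebra_simps)
      qed
      moreover have "\<bar>\<mu>\<bar> * real i \<le> (3/32) * real m * t^2 / cc^2"
      proof -
        have "\<bar>\<mu>\<bar> * real i = (3/32) * T * (4 * real i) / cc^2" unfolding amu by simp
        also have "\<dots> \<le> (3/32) * T * (real m * T) / cc^2"
          using True T cc2 by (intro divide_right_mono mult_left_mono) auto
        also have "\<dots> = (3/32) * real m * t^2 / cc^2" using T by (simp add: power2_eq_square)
        finally show ?thesis .
      qed
      moreover have "(3/32) * real m * t^2 / cc^2 + real m * (-(15/64) * t^2 / cc^2) = (- b) * real m"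
        unfolding b_def by (simp add: field_simps)
      ultimately show ?thesis using muG by linarith
    qed
    have "first_hit Pz Pp q m (r, i) \<le> exp (3/16 + (- b) * real m)"
      using ch ex by (meson exp_le_cancel_iff order_trans)
    also have "\<dots> = exp (3/16) * \<rho> ^ m"
    proof -
      have "exp (3/16 + (- b) * real m) = exp (3/16) * exp (real m * (- b))"
        using exp_add[of "3/16" "real m * (- b)"] by (simp add: mult.commute)
      moreover have "exp (real m * (- b)) = exp (- b) ^ m" by (rule exp_of_nat_mult)
      ultimately show ?thesis unfolding \<rho>_def by simp
    qed
    also have "\<dots> \<le> 2 * \<rho> ^ m" using e316 \<rho> by (intro mult_right_mono) auto
    finally have "real m * first_hit Pz Pp q m (r, i) \<le> real m * (2 * \<rho> ^ m)" by (intro mult_left_mono) auto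
    moreover have "0 \<le> (4 * real i / T) * first_hit Pz Pp q m (r, i)" using T by (simp add: H_nonneg)
    ultimately show ?thesis by (simp add: algebra_simps)
  next
    case False
    then have "real m \<le> 4 * real i / T" using T by (simp add: field_simps)
    then have "real m * first_hit Pz Pp q m (r, i) \<le> (4 * real i / T) * first_hit Pz Pp q m (r, i)"
      by (intro mult_right_mono) (auto simp: H_nonneg)
    moreover have "0 \<le> 2 * (real m * \<rho> ^ m)" using \<rho> by simp
    ultimately show ?thesis by linarith
  qed
  have "(\<Sum>m\<le>M. real m * first_hit Pz Pp q m (r, i)) \<le>
      (\<Sum>m\<le>M. (4 * real i / T) * first_hit Pz Pp q m (r, i) + 2 * (real m * \<rho> ^ m))"
    by (intro sum_mono pt)
  also have "\<dots> = (4 * real i / T) * (\<Sum>m\<le>M. first_hit Pz Pp q m (r, i)) + 2 * (\<Sum>m\<le>M. real m * \<rho> ^ m)"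
    by (simp add: sum.distrib sum_distrib_left)
  also have "\<dots> \<le> (4 * real i / T) * 1 + 2 * (\<rho> / (1 - \<rho>)^2)"
    using H_psum_le1 sum_m_rho_le[OF \<rho>] T by (intro add_mono mult_left_mono) auto
  also have "\<rho> / (1 - \<rho>)^2 \<le> (1 + b)^2 / b^2" unfolding \<rho>_def by (rule rho_bound[OF b])
  finally show ?thesis unfolding T_def b_def cc_def by simp
qed

end

context pctx
begin

lemma H_N:
  assumes "(r, q) \<notin> (X_edges Pp)\<^sup>*"
  shows "first_hit Pz Pp q m (r, i) = 0"
  using assms
proof (induction m arbitrary: r i)
  case 0 then show ?case by auto
next
  case (Suc m)
  show ?case
  proof (cases "i = 0")
    case True then show ?thesis by simp
  next
    case False
    have "\<And>r' c. Pp r c r' * first_hit Pz Pp q m (r', nat (int i + c)) = 0"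
    proof -
      fix r' c
      show "Pp r c r' * first_hit Pz Pp q m (r', nat (int i + c)) = 0"
      proof (cases "Pp r c r' > 0")
        case True
        then have "c \<in> {-1,0,1}" using Pp_pos_c by blast
        then have "Pp r c r' \<le> X_mat Pp r r'" unfolding X_mat_def
          by (intro member_le_sum) (auto simp: Pp_nonneg)
        then have "(r, r') \<in> X_edges Pp" using True unfolding X_edges_def by auto
        then have "(r', q) \<notin> (X_edges Pp)\<^sup>*" using Suc.prems
          by (meson converse_rtrancl_into_rtrancl)
        then show ?thesis using Suc.IH by simp
      next
        case False
        then have "Pp r c r' = 0" using Pp_nonneg[of r c r'] by linarith
        then show ?thesis by simp
      qed
    qed
    then have "(\<Sum>r'\<in>UNIV. \<Sum>c\<in>{-1,0,1}. Pp r c r' * first_hit Pz Pp q m (r', nat (int i + c))) = 0"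
      by (intro sum.neutral ballI)
    then show ?thesis using H_Suc[where i=i and m=m and r=r and q=q] False by simp
  qed
qed

lemma S_rec:
  assumes i: "i > 0"
  shows "(\<Sum>m\<le>Suc M. real m * first_hit Pz Pp q m (r, i)) =
    (\<Sum>r'\<in>UNIV. \<Sum>c\<in>{-1,0,1}. Pp r c r' *
        ((\<Sum>m\<le>M. real m * first_hit Pz Pp q m (r', nat (int i + c))) +
         (\<Sum>m\<le>M. first_hit Pz Pp q m (r', nat (int i + c)))))"
proof -
  have "(\<Sum>m\<le>Suc M. real m * first_hit Pz Pp q m (r, i)) =
      (\<Sum>m\<le>M. real (Suc m) * first_hit Pz Pp q (Suc m) (r, i))"
    by (subst sum.atMost_Suc_shift) simp
  also have "\<dots> = (\<Sum>m\<le>M. \<Sum>r'\<in>UNIV. \<Sum>c\<in>{-1,0,1}.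
        Pp r c r' * (real (Suc m) * first_hit Pz Pp q m (r', nat (int i + c))))"
    by (simp only: H_Suc[OF i] sum_distrib_left mult.left_commute)
  also have "\<dots> = (\<Sum>r'\<in>UNIV. \<Sum>c\<in>{-1,0,1}. \<Sum>m\<le>M.
        Pp r c r' * (real (Suc m) * first_hit Pz Pp q m (r', nat (int i + c))))"
  proof -
    have "(\<Sum>m\<le>M. \<Sum>r'\<in>UNIV. \<Sum>c\<in>{-1,0,1}. f m r' c) = (\<Sum>r'\<in>UNIV. \<Sum>c\<in>{-1,0,1}. \<Sum>m\<le>M. f m r' c)"
      for f :: "nat \<Rightarrow> 'q \<Rightarrow> int \<Rightarrow> real"
    proof -
      have "(\<Sum>m\<le>M. \<Sum>r'\<in>UNIV. \<Sum>c\<in>{-1,0,1}. f m r' c) = (\<Sum>r'\<in>UNIV. \<Sum>m\<le>M. \<Sum>c\<in>{-1,0,1}. f m r' c)"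
        by (rule sum.swap)
      also have "\<dots> = (\<Sum>r'\<in>UNIV. \<Sum>c\<in>{-1,0,1}. \<Sum>m\<le>M. f m r' c)"
        by (rule sum.cong[OF refl], rule sum.swap)
      finally show ?thesis .
    qed
    then show ?thesis .
  qed
  also have "\<dots> = (\<Sum>r'\<in>UNIV. \<Sum>c\<in>{-1,0,1}. Pp r c r' *
        ((\<Sum>m\<le>M. real m * first_hit Pz Pp q m (r', nat (int i + c))) +
         (\<Sum>m\<le>M. first_hit Pz Pp q m (r', nat (int i + c)))))"
  proof (intro sum.cong refl)
    fix r' c
    have "(\<Sum>m\<le>M. real (Suc m) * first_hit Pz Pp q m (r', nat (int i + c))) =
      (\<Sum>m\<le>M. real m * first_hit Pz Pp q m (r', nat (int i + c)) + first_hit Pz Pp q m (r', nat (int i + c)))"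
      by (intro sum.cong refl) (simp add: algebra_simps)
    also have "\<dots> = (\<Sum>m\<le>M. real m * first_hit Pz Pp q m (r', nat (int i + c))) +
         (\<Sum>m\<le>M. first_hit Pz Pp q m (r', nat (int i + c)))"
      by (rule sum.distrib)
    finally show "(\<Sum>m\<le>M. Pp r c r' * (real (Suc m) * first_hit Pz Pp q m (r', nat (int i + c)))) =
      Pp r c r' * ((\<Sum>m\<le>M. real m * first_hit Pz Pp q m (r', nat (int i + c))) +
         (\<Sum>m\<le>M. first_hit Pz Pp q m (r', nat (int i + c))))"
      by (simp only: sum_distrib_left[symmetric])
  qed
  finally show ?thesis .
qed

lemma sum_if_in: fixes h f :: "'q \<Rightarrow> real" shows "(\<Sum>r'\<in>UNIV. h r' * (if r' \<in> A then f r' else 0)) = (\<Sum>r'\<in>A. h r' * f r')"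
proof -
  have "(\<Sum>r'\<in>UNIV. h r' * (if r' \<in> A then f r' else 0)) = (\<Sum>r'\<in>A. h r' * (if r' \<in> A then f r' else 0))"
    by (rule sum.mono_neutral_right) auto
  then show ?thesis by simp
qed

end

context bctx
begin

lemma S1_total:
  fixes g :: "'q \<Rightarrow> real" and G0 Cb :: real
  assumes geq: "\<forall>r\<in>B. g r = drift Pp r - t + (\<Sum>r'\<in>UNIV. X_mat Pp r r' * g r')"
    and gb: "\<forall>r. \<bar>g r\<bar> \<le> G0"
    and qB: "q \<in> B" and t0: "t \<noteq> 0"
    and Cb: "Cb = 2 * (1 + 9 * t^2 / (64 * (2 + 2 * G0)^2))^2 / (9 * t^2 / (64 * (2 + 2 * G0)^2))^2"
    and pR: "(p, q) \<in> (X_edges Pp)\<^sup>*"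
  shows "(\<Sum>m\<le>M. real m * first_hit Pz Pp q m (p, 1)) \<le>
     (2 * real (CARD('q) - 1) + 1) * (1 + 4 / \<bar>t\<bar> + Cb) / xm ^ (CARD('q) - 1)"
proof -
  define \<beta> where "\<beta> = 4 / \<bar>t\<bar>"
  have \<beta>0: "\<beta> \<ge> 0" unfolding \<beta>_def by simp
  have Cb0: "Cb \<ge> 0" unfolding Cb by simp
  have SB: "r \<in> B \<Longrightarrow> (\<Sum>m\<le>M. real m * first_hit Pz Pp q m (r, i)) \<le> \<beta> * real i + Cb" for r i M
    using S1_B[OF geq gb qB t0, where r=r and M=M and i=i] unfolding Cb \<beta>_def by simp
  define Tr where "Tr = {r. (r, q) \<in> (X_edges Pp)\<^sup>*} - B"
  have reach: "\<forall>r\<in>Tr. \<exists>r'. (r, r') \<in> (X_edges Pp)\<^sup>* \<and> r' \<notin> Tr"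
    using qB unfolding Tr_def by blast
  define bT where "bT r = 1 + \<beta> * drift Pp r + Cb * (\<Sum>r'\<in>B. X_mat Pp r r')" for r
  obtain a where a: "\<forall>r\<in>Tr. a r = bT r + (\<Sum>r'\<in>Tr. X_mat Pp r r' * a r')"
    using mp_exists[OF reach] by blast
  have bTb: "\<forall>r\<in>Tr. \<bar>bT r\<bar> \<le> 1 + \<beta> + Cb"
  proof
    fix r
    have "\<bar>\<beta> * drift Pp r\<bar> \<le> \<beta>" using drift_abs[of r] \<beta>0 by (simp add: abs_mult mult_left_le)
    moreover have "\<bar>Cb * (\<Sum>r'\<in>B. X_mat Pp r r')\<bar> \<le> Cb"
      using X_sum_le[where A=B and r=r] Cb0 sum_nonneg[of B "X_mat Pp r"] X_nonneg
      by (simp add: abs_mult mult_left_le)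
    ultimately show "\<bar>bT r\<bar> \<le> 1 + \<beta> + Cb" unfolding bT_def by linarith
  qed
  define A0 where "A0 = real (card Tr) * (1 + \<beta> + Cb) / xm ^ card Tr"
  have ab: "\<forall>r\<in>Tr. \<bar>a r\<bar> \<le> A0" unfolding A0_def
    by (rule mp_bound[OF reach a bTb]) (use \<beta>0 Cb0 in simp)
  have A00: "A0 \<ge> 0" unfolding A0_def using \<beta>0 Cb0 xm_pos by simp
  have BR: "B \<subseteq> {r. (r, q) \<in> (X_edges Pp)\<^sup>*}" using B_conn qB by blast
  have ST: "\<forall>r\<in>Tr. \<forall>i. (\<Sum>m\<le>M. real m * first_hit Pz Pp q m (r, i)) \<le> a r + A0 + \<beta> * real i" for M
  proof (induction M)
    case 0
    show ?case
    proof (intro ballI allI)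
      fix r i assume "r \<in> Tr"
      then have "- A0 \<le> a r" using ab by force
      moreover have "0 \<le> \<beta> * real i" using \<beta>0 by simp
      ultimately show "(\<Sum>m\<le>0. real m * first_hit Pz Pp q m (r, i)) \<le> a r + A0 + \<beta> * real i" by simp
    qed
  next
    case (Suc M)
    show ?case
    proof (intro ballI allI)
      fix r i assume rT: "r \<in> Tr"
      have rq: "r \<noteq> q" using rT qB unfolding Tr_def by auto
      show "(\<Sum>m\<le>Suc M. real m * first_hit Pz Pp q m (r, i)) \<le> a r + A0 + \<beta> * real i"
      proof (cases "i = 0")
        case True
        have "\<And>m. first_hit Pz Pp q m (r, i) = 0" using True rq by (case_tac m) auto
        then have "(\<Sum>m\<le>Suc M. real m * first_hit Pz Pp q m (r, i)) = 0" by simp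
        then show ?thesis using ab rT \<beta>0 True by force
      next
        case False
        then have i: "i > 0" by simp
        define F where "F r' c = (if r' \<in> Tr then a r' + A0 else 0) + (if r' \<in> B then Cb else 0)
            + \<beta> * (real i + of_int c) + 1" for r' and c :: int
        have tb: "Pp r c r' * ((\<Sum>m\<le>M. real m * first_hit Pz Pp q m (r', nat (int i + c))) +
            (\<Sum>m\<le>M. first_hit Pz Pp q m (r', nat (int i + c)))) \<le> Pp r c r' * F r' c"
          if c: "c \<in> {-1,0,1}" for r' c
        proof (intro mult_left_mono)
          show "0 \<le> Pp r c r'" by (rule Pp_nonneg)
          have ni: "real (nat (int i + c)) = real i + of_int c" using i c by auto
          have nn: "real i + of_int c \<ge> 0" using i c by auto
          have S0: "(\<Sum>m\<le>M. first_hit Pz Pp q m (r', nat (int i + c))) \<le> 1" by (rule H_psum_le1)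
          show "(\<Sum>m\<le>M. real m * first_hit Pz Pp q m (r', nat (int i + c))) +
            (\<Sum>m\<le>M. first_hit Pz Pp q m (r', nat (int i + c))) \<le> F r' c"
          proof (cases "r' \<in> Tr")
            case True
            have "(\<Sum>m\<le>M. real m * first_hit Pz Pp q m (r', nat (int i + c))) \<le> a r' + A0 + \<beta> * (real i + of_int c)"
              using Suc.IH True ni by metis
            moreover have "r' \<notin> B" using True unfolding Tr_def by simp
            ultimately show ?thesis using S0 True unfolding F_def by simp
          next
            case False
            show ?thesis
            proof (cases "r' \<in> B")
              case True
              have "(\<Sum>m\<le>M. real m * first_hit Pz Pp q m (r', nat (int i + c))) \<le> \<beta> * (real i + of_int c) + Cb"
                using SB[OF True, where M=M and i="nat (int i + c)"] ni by simp
              then show ?thesis using S0 True False unfolding F_def by simp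
            next
              case False2: False
              then have "(r', q) \<notin> (X_edges Pp)\<^sup>*" using False unfolding Tr_def by blast
              then have "\<And>m. first_hit Pz Pp q m (r', nat (int i + c)) = 0" using H_N by blast
              then show ?thesis using False False2 nn \<beta>0 unfolding F_def by simp
            qed
          qed
        qed
        have "(\<Sum>m\<le>Suc M. real m * first_hit Pz Pp q m (r, i)) \<le>
            (\<Sum>r'\<in>UNIV. \<Sum>c\<in>{-1,0,1}. Pp r c r' * F r' c)"
          unfolding S_rec[OF i] by (intro sum_mono tb) auto
        also have "(\<Sum>r'\<in>UNIV. \<Sum>c\<in>{-1,0,1}. Pp r c r' * F r' c) =
            (\<Sum>r'\<in>UNIV. X_mat Pp r r' * (if r' \<in> Tr then a r' + A0 else 0))
            + (\<Sum>r'\<in>UNIV. X_mat Pp r r' * (if r' \<in> B then Cb else 0))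
            + \<beta> * real i * (\<Sum>r'\<in>UNIV. \<Sum>c\<in>{-1,0,1}. Pp r c r')
            + \<beta> * (\<Sum>r'\<in>UNIV. \<Sum>c\<in>{-1,0,1}. Pp r c r' * of_int c)
            + (\<Sum>r'\<in>UNIV. \<Sum>c\<in>{-1,0,1}. Pp r c r')"
        proof -
          have per: "(\<Sum>c\<in>{-1,0,1}. Pp r c r' * F r' c) =
             X_mat Pp r r' * (if r' \<in> Tr then a r' + A0 else 0) + X_mat Pp r r' * (if r' \<in> B then Cb else 0)
             + \<beta> * real i * (\<Sum>c\<in>{-1,0,1}. Pp r c r') + \<beta> * (\<Sum>c\<in>{-1,0,1}. Pp r c r' * of_int c)
             + (\<Sum>c\<in>{-1,0,1}. Pp r c r')" for r'
            unfolding F_def X_mat_def by (simp add: algebra_simps)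
          show ?thesis
            by (simp only: per sum.distrib sum_distrib_left[symmetric])
        qed
        also have "\<dots> = (\<Sum>r'\<in>Tr. X_mat Pp r r' * a r') + A0 * (\<Sum>r'\<in>Tr. X_mat Pp r r')
            + Cb * (\<Sum>r'\<in>B. X_mat Pp r r') + \<beta> * real i + \<beta> * drift Pp r + 1"
        proof -
          have e1: "(\<Sum>r'\<in>UNIV. X_mat Pp r r' * (if r' \<in> Tr then a r' + A0 else 0)) =
              (\<Sum>r'\<in>Tr. X_mat Pp r r' * a r') + A0 * (\<Sum>r'\<in>Tr. X_mat Pp r r')"
            unfolding sum_if_in by (simp add: algebra_simps sum.distrib sum_distrib_left)
          have e2: "(\<Sum>r'\<in>UNIV. X_mat Pp r r' * (if r' \<in> B then Cb else 0)) = Cb * (\<Sum>r'\<in>B. X_mat Pp r r')"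
            unfolding sum_if_in by (simp add: algebra_simps sum_distrib_left)
          show ?thesis unfolding e1 e2 using Pp_sum[of r] drift_alt[of r] by simp
        qed
        also have "\<dots> \<le> (\<Sum>r'\<in>Tr. X_mat Pp r r' * a r') + A0 + Cb * (\<Sum>r'\<in>B. X_mat Pp r r') + \<beta> * real i + \<beta> * drift Pp r + 1"
          using X_sum_le[where A=Tr and r=r] A00 by (simp add: mult_left_le)
        also have "\<dots> = a r + A0 + \<beta> * real i" using a rT unfolding bT_def by simp
        finally show ?thesis .
      qed
    qed
  qed
  let ?L = "CARD('q) - 1"
  have cTr: "card Tr \<le> ?L"
  proof -
    obtain q0 where "q0 \<in> B" using B_ne by blast
    then have "Tr \<subseteq> UNIV - {q0}" unfolding Tr_def by auto
    then have "card Tr \<le> card (UNIV - {q0} :: 'q set)" by (intro card_mono) auto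
    then show ?thesis by simp
  qed
  have A0b: "A0 \<le> real ?L * (1 + \<beta> + Cb) / xm ^ ?L"
    unfolding A0_def
  proof (rule frac_le)
    have "real (card Tr) \<le> real ?L" using cTr by (simp only: of_nat_le_iff)
    then show "real (card Tr) * (1 + \<beta> + Cb) \<le> real ?L * (1 + \<beta> + Cb)"
      using \<beta>0 Cb0 by (intro mult_right_mono) auto
    show "0 < xm ^ ?L" using xm_pos by simp
    show "xm ^ ?L \<le> xm ^ card Tr" using cTr xm_pos xm_le1 by (intro power_decreasing) auto
  qed (use \<beta>0 Cb0 in simp)
  have y: "0 < xm ^ ?L" "xm ^ ?L \<le> 1" using xm_pos xm_le1 by (auto simp: power_le_one)
  have one: "(1 + \<beta> + Cb) \<le> (1 + \<beta> + Cb) / xm ^ ?L"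
    using y \<beta>0 Cb0 by (simp add: le_divide_eq mult_left_le)
  have "(\<Sum>m\<le>M. real m * first_hit Pz Pp q m (p, 1)) \<le> 2 * A0 + \<beta> + Cb"
  proof (cases "p \<in> B")
    case True
    have "(\<Sum>m\<le>M. real m * first_hit Pz Pp q m (p, 1)) \<le> \<beta> * 1 + Cb" using SB[OF True, where M=M and i=1] by simp
    then show ?thesis using A00 by simp
  next
    case False
    then have "p \<in> Tr" using pR unfolding Tr_def by blast
    then have "(\<Sum>m\<le>M. real m * first_hit Pz Pp q m (p, 1)) \<le> a p + A0 + \<beta> * 1" using ST[of M] by (metis of_nat_1)
    moreover have "a p \<le> A0" using ab \<open>p \<in> Tr\<close> by force
    ultimately show ?thesis using Cb0 by simp
  qed
  also have "\<dots> \<le> 2 * (real ?L * (1 + \<beta> + Cb) / xm ^ ?L) + (1 + \<beta> + Cb) / xm ^ ?L"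
    using A0b one by linarith
  also have "\<dots> = (2 * real ?L + 1) * (1 + \<beta> + Cb) / xm ^ ?L"
  proof -
    have gen: "2 * (LL * K / y) + K / y = (2 * LL + 1) * K / y" for LL K y :: real
      by (simp add: add_divide_distrib[symmetric] algebra_simps)
    show ?thesis by (rule gen)
  qed
  finally show ?thesis unfolding \<beta>_def .
qed

end

lemma final_arith:
  fixes N y T Cb :: real
  assumes N: "N \<ge> 1" and y: "0 < y" "y \<le> 1" and T: "0 < T" "T \<le> 1"
    and p5: "(2 * N - 1) ^ 5 \<le> 16 * N ^ 6"
    and Cb: "Cb = 2 * (1 + 9 * T^2 / (64 * (2 + 2 * (2 * (N - 1) / y))^2))^2 /
                     (9 * T^2 / (64 * (2 + 2 * (2 * (N - 1) / y))^2))^2"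
  shows "(2 * (N - 1) + 1) * (1 + 4 / T + Cb) / y \<le> 85000 * N ^ 6 / (y ^ 5 * T ^ 4)"
proof -
  define cc where "cc = 2 + 2 * (2 * (N - 1) / y)"
  define b where "b = 9 * T^2 / (64 * cc^2)"
  define K where "K = 2 * N - 1"
  have K1: "K \<ge> 1" unfolding K_def using N by simp
  have cc2: "cc \<ge> 2" unfolding cc_def using N y by simp
  have ccle: "cc \<le> 2 * K / y"
  proof -
    have "cc * y = 2 * y + 4 * (N - 1)" unfolding cc_def using y by (simp add: field_simps)
    also have "\<dots> \<le> 2 * K" unfolding K_def using y by simp
    finally show ?thesis using y by (simp add: field_simps)
  qed
  have b0: "b > 0" unfolding b_def using T cc2 by simp
  have bs: "b \<le> 9 / 256"
  proof -
    have "T^2 \<le> 1" using T by (simp add: power_le_one)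
    moreover have "cc^2 \<ge> 4"
    proof -
      have "(2::real)^2 \<le> cc^2" using cc2 by (intro power_mono) auto
      then show ?thesis by simp
    qed
    ultimately have "9 * T^2 / (64 * cc^2) \<le> 9 * 1 / (64 * 4)"
      by (intro frac_le) auto
    then show ?thesis unfolding b_def by simp
  qed
  have Cbb: "Cb \<le> 4 / b^2"
  proof -
    have "(1 + b)^2 \<le> 2"
    proof -
      have "(1 + b)^2 \<le> (1 + 9/256)^2" using b0 bs by (intro power_mono) auto
      then show ?thesis by (simp add: power2_eq_square)
    qed
    then have "2 * (1 + b)^2 / b^2 \<le> 2 * 2 / b^2" using b0 by (intro divide_right_mono) auto
    then show ?thesis unfolding Cb cc_def[symmetric] b_def[symmetric] by simp
  qed
  have b2: "4 / b^2 = 16384 * cc^4 / (81 * T^4)"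
    unfolding b_def using T cc2 by (simp add: field_simps power2_eq_square power4_eq_xxxx)
  have cc4: "cc^4 \<le> 16 * K^4 / y^4"
  proof -
    have "cc^4 \<le> (2 * K / y)^4" using ccle cc2 by (intro power_mono) auto
    also have "\<dots> = 16 * K^4 / y^4" by (simp add: power_divide power_mult_distrib)
    finally show ?thesis .
  qed
  have yT: "0 < y^4 * T^4" "y^4 * T^4 \<le> T" "y^4 * T^4 \<le> 1"
  proof -
    show "0 < y^4 * T^4" using y T by simp
    have "y^4 \<le> 1" "T^4 \<le> 1" using y T by (auto simp: power_le_one)
    moreover have "T^4 \<le> T"
    proof -
      have "T^4 = T * T^3" by (simp add: power_eq_if numeral_eq_Suc)
      also have "\<dots> \<le> T * 1" using T by (intro mult_left_mono) (auto simp: power_le_one)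
      finally show ?thesis by simp
    qed
    moreover have "y^4 * T^4 \<le> 1 * T^4" using \<open>y^4 \<le> 1\<close> T by (intro mult_right_mono) auto
    ultimately show "y^4 * T^4 \<le> T" "y^4 * T^4 \<le> 1" by auto
  qed
  have CbK: "Cb \<le> 262144 * K^4 / (81 * (y^4 * T^4))"
  proof -
    have "Cb \<le> 16384 * cc^4 / (81 * T^4)" using Cbb b2 by simp
    also have "\<dots> \<le> 16384 * (16 * K^4 / y^4) / (81 * T^4)"
      using cc4 T by (intro divide_right_mono mult_left_mono) auto
    also have "\<dots> = 262144 * K^4 / (81 * (y^4 * T^4))" using y by (simp add: field_simps)
    finally show ?thesis .
  qed
  have one4: "1 + 4 / T \<le> 5 / (y^4 * T^4)"
  proof -
    have "1 \<le> 1 / (y^4 * T^4)" using yT by (simp add: le_divide_eq)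
    moreover have "4 / T \<le> 4 / (y^4 * T^4)" using yT T by (intro divide_left_mono) auto
    ultimately show ?thesis by simp
  qed
  have sum: "1 + 4 / T + Cb \<le> (5 + 262144 / 81 * K^4) / (y^4 * T^4)"
    using one4 CbK by (simp add: add_divide_distrib)
  have "(2 * (N - 1) + 1) * (1 + 4 / T + Cb) / y = K * (1 + 4 / T + Cb) / y" unfolding K_def by simp
  also have "\<dots> \<le> K * ((5 + 262144 / 81 * K^4) / (y^4 * T^4)) / y"
    using sum K1 y by (intro divide_right_mono mult_left_mono) auto
  also have "\<dots> = (5 * K + 262144 / 81 * K^5) / (y^5 * T^4)"
    using y T by (simp add: field_simps power_eq_if numeral_eq_Suc)
  also have "\<dots> \<le> (10 * N^6 + 262144 / 81 * (16 * N^6)) / (y^5 * T^4)"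
  proof (intro divide_right_mono add_mono mult_left_mono)
    have "K \<le> 2 * N" unfolding K_def by simp
    also have "\<dots> \<le> 2 * N^6" using N by (simp add: self_le_power)
    finally show "5 * K \<le> 10 * N^6" by simp
    show "K^5 \<le> 16 * N^6" using p5 unfolding K_def .
  qed (use y T in auto)
  also have "\<dots> \<le> 85000 * N^6 / (y^5 * T^4)"
    using y T N by (intro divide_right_mono) auto
  finally show ?thesis .
qed

lemma pow5_bound: "n \<ge> 1 \<Longrightarrow> (2 * real n - 1) ^ 5 \<le> 16 * real n ^ 6"
proof -
  assume n: "n \<ge> 1"
  show ?thesis
  proof (cases "n = 1")
    case True then show ?thesis by simp
  next
    case False
    then have n2: "real n \<ge> 2" using n by simp
    have "(2 * real n - 1) ^ 5 \<le> (2 * real n) ^ 5" using n by (intro power_mono) auto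
    also have "\<dots> = 32 * real n ^ 5" by (simp add: power_mult_distrib)
    also have "\<dots> = 16 * (2 * real n ^ 5)" by simp
    also have "\<dots> \<le> 16 * (real n * real n ^ 5)" using n2 by (intro mult_left_mono mult_right_mono) auto
    also have "\<dots> = 16 * real n ^ 6" by (simp add: power_eq_if numeral_eq_Suc)
    finally show ?thesis .
  qed
qed

theorem mainTheorem5:
  fixes dz dp :: "('q::finite \<times> int \<times> 'q) set"
    and Pz Pp :: "'q \<Rightarrow> int \<Rightarrow> 'q \<Rightarrow> real"
    and p q :: 'q and B :: "'q set" and \<alpha> :: "'q \<Rightarrow> real"
  assumes "pOC dz dp Pz Pp"
    and "term_prob Pz Pp p q > 0"
    and "is_bscc Pp B" and "q \<in> B"
    and "is_inv_dist Pp B \<alpha>"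
    and "trend Pp B \<alpha> \<noteq> 0"
  shows "summable (\<lambda>n. real n * first_hit Pz Pp q n (p, 1)) \<and>
         exp_time Pz Pp p q \<le>
           85000 * real CARD('q) ^ 6 /
           (x_min dz dp Pz Pp ^ (5 * CARD('q) + CARD('q) ^ 3) * trend Pp B \<alpha> ^ 4)"
proof -
  interpret bctx dz dp Pz Pp B \<alpha>
    by unfold_locales (use assms in auto)
  note tp = assms(2) and qB = assms(4) and t0 = assms(6)
  let ?n = "CARD('q)"
  obtain g where geq: "\<forall>r\<in>B. g r = drift Pp r - t + (\<Sum>r'\<in>UNIV. X_mat Pp r r' * g r')"
    and gb: "\<forall>r. \<bar>g r\<bar> \<le> 2 * real (?n - 1) / xm ^ (?n - 1)"
    using poisson by blast
  define G0 where "G0 = 2 * real (?n - 1) / xm ^ (?n - 1)"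
  define Cb where "Cb = 2 * (1 + 9 * t^2 / (64 * (2 + 2 * G0)^2))^2 / (9 * t^2 / (64 * (2 + 2 * G0)^2))^2"
  have pR: "(p, q) \<in> (X_edges Pp)\<^sup>*"
  proof (rule ccontr)
    assume "(p, q) \<notin> (X_edges Pp)\<^sup>*"
    then have "\<And>m. first_hit Pz Pp q m (p, 1) = 0" using H_N by blast
    then show False using tp unfolding term_prob_def by simp
  qed
  define Bnd where "Bnd = (2 * real (?n - 1) + 1) * (1 + 4 / \<bar>t\<bar> + Cb) / xm ^ (?n - 1)"
  have S: "(\<Sum>m\<le>M. real m * first_hit Pz Pp q m (p, 1)) \<le> Bnd" for M
    unfolding Bnd_def by (rule S1_total[OF geq _ qB t0 _ pR]) (use gb G0_def Cb_def in auto)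
  have S': "(\<Sum>m<k. real m * first_hit Pz Pp q m (p, 1)) \<le> Bnd" for k
  proof (cases k)
    case 0
    have "0 \<le> (\<Sum>m\<le>0. real m * first_hit Pz Pp q m (p, 1))" by simp
    then show ?thesis using 0 S[of 0] by simp
  next
    case (Suc k')
    then have "{..<k} = {..k'}" by auto
    then show ?thesis using S[of k'] by simp
  qed
  have summ: "summable (\<lambda>m. real m * first_hit Pz Pp q m (p, 1))"
    by (rule summableI_nonneg_bounded[OF _ S']) (simp add: H_nonneg)
  have sle: "(\<Sum>m. real m * first_hit Pz Pp q m (p, 1)) \<le> Bnd"
    by (rule suminf_le_const[OF summ S'])
  have n1: "?n \<ge> 1" by (simp add: Suc_leI)
  have rn: "real (?n - 1) = real ?n - 1" using n1 by (simp add: of_nat_diff)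
  define y where "y = xm ^ (?n - 1)"
  have y: "0 < y" "y \<le> 1" unfolding y_def using xm_pos xm_le1 by (auto simp: power_le_one)
  define T where "T = \<bar>t\<bar>"
  have T: "0 < T" "T \<le> 1" "T^2 = t^2" "T^4 = t^4" unfolding T_def using t0 t_abs
    by (auto simp: power_even_abs_numeral)
  have Bnd2: "Bnd \<le> 85000 * real ?n ^ 6 / (y ^ 5 * T ^ 4)"
  proof -
    have "(2 * (real ?n - 1) + 1) * (1 + 4 / T + Cb) / y \<le> 85000 * real ?n ^ 6 / (y ^ 5 * T ^ 4)"
    proof (rule final_arith[OF _ y T(1,2) pow5_bound[OF n1]])
      show "1 \<le> real ?n" using n1 by simp
      show "Cb = 2 * (1 + 9 * T\<^sup>2 / (64 * (2 + 2 * (2 * (real ?n - 1) / y))\<^sup>2))\<^sup>2 /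
          (9 * T\<^sup>2 / (64 * (2 + 2 * (2 * (real ?n - 1) / y))\<^sup>2))\<^sup>2"
        unfolding Cb_def G0_def y_def T(3) rn by simp
    qed
    then show ?thesis unfolding Bnd_def rn y_def T_def by simp
  qed
  have tpl: "term_prob Pz Pp p q \<ge> xm ^ (?n ^ 3)" by (rule term_prob_lower[OF tp])
  have xn: "0 < xm ^ (?n ^ 3)" using xm_pos by simp
  have "exp_time Pz Pp p q = (\<Sum>m. real m * first_hit Pz Pp q m (p, 1)) / term_prob Pz Pp p q"
    unfolding exp_time_def by simp
  also have "\<dots> \<le> Bnd / xm ^ (?n ^ 3)"
  proof (rule frac_le)
    show "0 \<le> Bnd" using sle suminf_nonneg[OF summ] H_nonneg by (meson mult_nonneg_nonneg of_nat_0_le_iff order_trans)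
    show "(\<Sum>m. real m * first_hit Pz Pp q m (p, 1)) \<le> Bnd" by (rule sle)
  qed (use xn tpl in auto)
  also have "\<dots> \<le> (85000 * real ?n ^ 6 / (y ^ 5 * T ^ 4)) / xm ^ (?n ^ 3)"
    using Bnd2 xn by (intro divide_right_mono) auto
  also have "\<dots> = 85000 * real ?n ^ 6 / ((y ^ 5 * xm ^ (?n ^ 3)) * T ^ 4)"
    by (simp add: field_simps)
  also have "\<dots> \<le> 85000 * real ?n ^ 6 / (xm ^ (5 * ?n + ?n ^ 3) * T ^ 4)"
  proof (intro divide_left_mono mult_right_mono)
    have "y ^ 5 = xm ^ ((?n - 1) * 5)" unfolding y_def by (rule power_mult[symmetric])
    then have "y ^ 5 * xm ^ (?n ^ 3) = xm ^ (5 * (?n - 1) + ?n ^ 3)"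
      by (simp add: power_add mult.commute)
    also have "\<dots> \<ge> xm ^ (5 * ?n + ?n ^ 3)" using xm_pos xm_le1 n1 by (intro power_decreasing) auto
    finally show "xm ^ (5 * ?n + ?n ^ 3) \<le> y ^ 5 * xm ^ (?n ^ 3)" .
  next
    have "0 < t ^ 4" using t0 by simp
    then show "0 < y ^ 5 * xm ^ (?n ^ 3) * T ^ 4 * (xm ^ (5 * ?n + ?n ^ 3) * T ^ 4)"
      using xm_pos y T by simp
  qed (use xm_pos T in auto)
  finally have "exp_time Pz Pp p q \<le> 85000 * real ?n ^ 6 / (x_min dz dp Pz Pp ^ (5 * ?n + ?n ^ 3) * t ^ 4)"
    unfolding xm_def T(4) .
  then show ?thesis using summ by simp
qed

end
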